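(* Let $\mathcal G$ be a topological $2$-group and $X$ a topological space. Let $c$ be a $\mathcal G$-valued Čech cocycle subordinate to an open cover $\mathcal U$ of $X$ and let $d$ be a $\mathcal G$-valued Čech cocycle subordinate to a refinement $\mathcal V$ of $\mathcal U$. Then any $\mathcal G$-bundle morphism $\pi_d\to\pi_c$ decomposes as a composition $\pi_d\to\pi_{c_{|\mathcal V}}\to\pi_c$ of $\mathcal G$-bundle morphisms, where $c_{|\mathcal V}$ is a restriction of $c$ to $\mathcal V$.
   Context: Topological $2$-group $\mathcal G=(\mathcal G_1\rightrightarrows\mathcal G_0)$, $\mathcal E=\mathrm{Ker}(s)$, ${}^xe=1_xe1_{x^{-1}}$. A $\mathcal G$-valued Čech cocycle subordinate to $\mathcal U=\{U_i\}_{i\in I}$ is $c=(\mathbf x,\mathbf e)$ with continuous $\mathbf x_{ij}\colon U_i\cap U_j\to\mathcal G_0$, $\mathbf e_{ijk}\colon U_i\cap U_j\cap U_k\to\mathcal E$, satisfying $t(\mathbf e_{ijk})\mathbf x_{ij}\mathbf x_{jk}=\mathbf x_{ik}$ and $\mathbf e_{ikl}\mathbf e_{ijk}=\mathbf e_{ijl}\,{}^{\mathbf x_{ij}}\mathbf e_{jkl}$. For $\mathcal V=\{V_a\}_{a\in A}$ and a refinement map $\alpha\colon A\to I$ ($V_a\subset U_{\alpha(a)}$), $c_{|\mathcal V,\alpha}$ has components $\mathbf x_{\alpha(a)\alpha(b)}$, $\mathbf e_{\alpha(a)\alpha(b)\alpha(c)}$ restricted. $\pi_c\colon P_c\to\overline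 X$ denotes the principal $\mathcal G$-bundle with objects $(u,x)_i\in\coprod_iU_i\times\mathcal G_0$, morphisms $(v,g)_{ij}\in\coprod_{i,j}(U_i\cap U_j)\times\mathcal G_1$, $s((v,g)_{ij})=(v,s(g))_i$, $t((v,g)_{ij})=(v,\mathbf x_{ij}(v)^{-1}t(g))_j$, $(v,g)_{ij}*(v,h)_{jk}=(v,\mathbf e_{ijk}(v)(g*(1_{\mathbf x_{ij}(v)}h)))_{ik}$ ($g*h=h1_{t(g)^{-1}}g$), right $\mathcal G$-action by right multiplication, projection to $X$. A $\mathcal G$-bundle morphism $\pi\to\pi'$ is a $\mathcal G$-equivariant continuous functor $f$ with $\pi'f=\pi$. *)

theory Defs
  imports "HOL-Analysis.Analysis"
begin

text \<open>The groups G0 (objects) and G1 (morphisms) of the topological 2-group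
are the (not necessarily commutative) topological groups given by the types 'g0 and 'g1
(class topological_group_add; the group law is written additively, so the paper's x y
becomes x + y, x^{-1} becomes - x, and the unit 1 becomes 0).
s, t :: G1 -> G0 are source and target, u :: G0 -> G1 is the identity map x |-> 1_x.\<close>

text \<open>Composition g * h (first g, then h) = h 1_{t(g)^{-1}} g.\<close>
definition comp2 :: "('g1::group_add \<Rightarrow> 'g0::group_add) \<Rightarrow> ('g0 \<Rightarrow> 'g1) \<Rightarrow> 'g1 \<Rightarrow> 'g1 \<Rightarrow> 'g1" where
  "comp2 t u g h = h + u (- t g) + g"

definition conj2 :: "('g0::group_add \<Rightarrow> 'g1::group_add) \<Rightarrow> 'g0 \<Rightarrow> 'g1 \<Rightarrow> 'g1" where
  "conj2 u x e = u x + e + u (- x)"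

definition top_2group ::
  "('g1::topological_group_add \<Rightarrow> 'g0::topological_group_add) \<Rightarrow> ('g1 \<Rightarrow> 'g0) \<Rightarrow> ('g0 \<Rightarrow> 'g1) \<Rightarrow> bool" where
  "top_2group s t u \<longleftrightarrow>
     continuous_on UNIV s \<and> continuous_on UNIV t \<and> continuous_on UNIV u \<and>
     (\<forall>a b. s (a + b) = s a + s b) \<and> (\<forall>a b. t (a + b) = t a + t b) \<and>
     (\<forall>x y. u (x + y) = u x + u y) \<and>
     (\<forall>x. s (u x) = x \<and> t (u x) = x) \<and>
     (\<forall>g h g' h'. s h = t g \<longrightarrow> s h' = t g' \<longrightarrow>
        comp2 t u (g + g') (h + h') = comp2 t u g h + comp2 t u g' h')"

definition open_cover :: "('i \<Rightarrow> 'x::topological_space set) \<Rightarrow> bool" where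
  "open_cover U \<longleftrightarrow> (\<forall>i. open (U i)) \<and> (\<Union>i. U i) = UNIV"

definition refines :: "('a \<Rightarrow> 'x set) \<Rightarrow> ('i \<Rightarrow> 'x set) \<Rightarrow> ('a \<Rightarrow> 'i) \<Rightarrow> bool" where
  "refines V U \<alpha> \<longleftrightarrow> (\<forall>a. V a \<subseteq> U (\<alpha> a))"

definition cech_cocycle ::
  "('g1::topological_group_add \<Rightarrow> 'g0::topological_group_add) \<Rightarrow> ('g1 \<Rightarrow> 'g0) \<Rightarrow> ('g0 \<Rightarrow> 'g1)
   \<Rightarrow> ('i \<Rightarrow> 'x::topological_space set) \<Rightarrow> ('i \<Rightarrow> 'i \<Rightarrow> 'x \<Rightarrow> 'g0) \<Rightarrow> ('i \<Rightarrow> 'i \<Rightarrow> 'i \<Rightarrow> 'x \<Rightarrow> 'g1) \<Rightarrow> bool" where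
  "cech_cocycle s t u U xx ee \<longleftrightarrow>
     (\<forall>i j. continuous_on (U i \<inter> U j) (xx i j)) \<and>
     (\<forall>i j k. continuous_on (U i \<inter> U j \<inter> U k) (ee i j k)) \<and>
     (\<forall>i j k v. v \<in> U i \<inter> U j \<inter> U k \<longrightarrow> s (ee i j k v) = 0) \<and>
     (\<forall>i j k v. v \<in> U i \<inter> U j \<inter> U k \<longrightarrow> t (ee i j k v) + xx i j v + xx j k v = xx i k v) \<and>
     (\<forall>i j k l v. v \<in> U i \<inter> U j \<inter> U k \<inter> U l \<longrightarrow>
        ee i k l v + ee i j k v = ee i j l v + conj2 u (xx i j v) (ee j k l v))"

definition restrX :: "('i \<Rightarrow> 'i \<Rightarrow> 'x \<Rightarrow> 'g0) \<Rightarrow> ('a \<Rightarrow> 'i) \<Rightarrow> 'a \<Rightarrow> 'a \<Rightarrow> 'x \<Rightarrow> 'g0" where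
  "restrX xx \<alpha> a b = xx (\<alpha> a) (\<alpha> b)"

definition restrE :: "('i \<Rightarrow> 'i \<Rightarrow> 'i \<Rightarrow> 'x \<Rightarrow> 'g1) \<Rightarrow> ('a \<Rightarrow> 'i) \<Rightarrow> 'a \<Rightarrow> 'a \<Rightarrow> 'a \<Rightarrow> 'x \<Rightarrow> 'g1" where
  "restrE ee \<alpha> a b c = ee (\<alpha> a) (\<alpha> b) (\<alpha> c)"

subsection \<open>The principal G-bundle P_c\<close>

text \<open>Objects (u,x)_i are encoded as (i,(u,x)); morphisms (v,g)_{ij} as ((i,j),(v,g)).\<close>

definition ObjP :: "('i \<Rightarrow> 'x set) \<Rightarrow> ('i \<times> ('x \<times> 'g0)) set" where
  "ObjP U = Sigma UNIV (\<lambda>i. U i \<times> UNIV)"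

definition MorP :: "('i \<Rightarrow> 'x set) \<Rightarrow> (('i \<times> 'i) \<times> ('x \<times> 'g1)) set" where
  "MorP U = Sigma UNIV (\<lambda>(i,j). (U i \<inter> U j) \<times> UNIV)"

definition ObjTop :: "('i \<Rightarrow> 'x::topological_space set) \<Rightarrow> ('i \<times> ('x \<times> 'g0::topological_space)) topology" where
  "ObjTop U = sum_topology (\<lambda>i. subtopology euclidean (U i \<times> UNIV)) UNIV"

definition MorTop :: "('i \<Rightarrow> 'x::topological_space set) \<Rightarrow> (('i \<times> 'i) \<times> ('x \<times> 'g1::topological_space)) topology" where
  "MorTop U = sum_topology (\<lambda>(i,j). subtopology euclidean ((U i \<inter> U j) \<times> UNIV)) UNIV"

definition srcP :: "('g1 \<Rightarrow> 'g0) \<Rightarrow> ('i \<times> 'i) \<times> ('x \<times> 'g1) \<Rightarrow> 'i \<times> ('x \<times> 'g0)" where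
  "srcP s m = (case m of ((i,j),(v,g)) \<Rightarrow> (i,(v, s g)))"

definition tgtP :: "('g1 \<Rightarrow> 'g0::group_add) \<Rightarrow> ('i \<Rightarrow> 'i \<Rightarrow> 'x \<Rightarrow> 'g0)
    \<Rightarrow> ('i \<times> 'i) \<times> ('x \<times> 'g1) \<Rightarrow> 'i \<times> ('x \<times> 'g0)" where
  "tgtP t xx m = (case m of ((i,j),(v,g)) \<Rightarrow> (j,(v, - xx i j v + t g)))"

text \<open>(v,g)_{ij} * (v,h)_{jk} = (v, e_{ijk}(v) (g * (1_{x_{ij}(v)} h)))_{ik}.\<close>
definition compP :: "('g1::group_add \<Rightarrow> 'g0::group_add) \<Rightarrow> ('g0 \<Rightarrow> 'g1)
    \<Rightarrow> ('i \<Rightarrow> 'i \<Rightarrow> 'x \<Rightarrow> 'g0) \<Rightarrow> ('i \<Rightarrow> 'i \<Rightarrow> 'i \<Rightarrow> 'x \<Rightarrow> 'g1)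
    \<Rightarrow> ('i \<times> 'i) \<times> ('x \<times> 'g1) \<Rightarrow> ('i \<times> 'i) \<times> ('x \<times> 'g1) \<Rightarrow> ('i \<times> 'i) \<times> ('x \<times> 'g1)" where
  "compP t u xx ee m n = (case m of ((i,j),(v,g)) \<Rightarrow> (case n of ((_,k),(_,h)) \<Rightarrow>
       ((i,k),(v, ee i j k v + comp2 t u g (u (xx i j v) + h)))))"

definition identP :: "('g1::group_add \<Rightarrow> 'g0::group_add) \<Rightarrow> ('g1 \<Rightarrow> 'g0) \<Rightarrow> ('g0 \<Rightarrow> 'g1)
    \<Rightarrow> ('i \<Rightarrow> 'x set) \<Rightarrow> ('i \<Rightarrow> 'i \<Rightarrow> 'x \<Rightarrow> 'g0) \<Rightarrow> ('i \<Rightarrow> 'i \<Rightarrow> 'i \<Rightarrow> 'x \<Rightarrow> 'g1)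
    \<Rightarrow> 'i \<times> ('x \<times> 'g0) \<Rightarrow> ('i \<times> 'i) \<times> ('x \<times> 'g1)" where
  "identP s t u U xx ee p = (THE m. m \<in> MorP U \<and> srcP s m = p \<and> tgtP t xx m = p \<and>
      (\<forall>n\<in>MorP U. srcP s n = p \<longrightarrow> compP t u xx ee m n = n) \<and>
      (\<forall>n\<in>MorP U. tgtP t xx n = p \<longrightarrow> compP t u xx ee n m = n))"

definition actO :: "'i \<times> ('x \<times> 'g0::plus) \<Rightarrow> 'g0 \<Rightarrow> 'i \<times> ('x \<times> 'g0)" where
  "actO p y = (case p of (i,(v,x)) \<Rightarrow> (i,(v, x + y)))"

definition actM :: "('i \<times> 'i) \<times> ('x \<times> 'g1::plus) \<Rightarrow> 'g1 \<Rightarrow> ('i \<times> 'i) \<times> ('x \<times> 'g1)" where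
  "actM m h = (case m of ((i,j),(v,g)) \<Rightarrow> ((i,j),(v, g + h)))"

text \<open>Projection to the discrete category X-bar (morphisms of X-bar = identities = points).\<close>
definition projO :: "'i \<times> ('x \<times> 'g0) \<Rightarrow> 'x" where
  "projO p = fst (snd p)"

definition projM :: "('i \<times> 'i) \<times> ('x \<times> 'g1) \<Rightarrow> 'x" where
  "projM m = fst (snd m)"

definition bundle_mor ::
  "('g1::topological_group_add \<Rightarrow> 'g0::topological_group_add) \<Rightarrow> ('g1 \<Rightarrow> 'g0) \<Rightarrow> ('g0 \<Rightarrow> 'g1)
   \<Rightarrow> ('a \<Rightarrow> 'x::topological_space set) \<Rightarrow> ('a \<Rightarrow> 'a \<Rightarrow> 'x \<Rightarrow> 'g0) \<Rightarrow> ('a \<Rightarrow> 'a \<Rightarrow> 'a \<Rightarrow> 'x \<Rightarrow> 'g1)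
   \<Rightarrow> ('i \<Rightarrow> 'x set) \<Rightarrow> ('i \<Rightarrow> 'i \<Rightarrow> 'x \<Rightarrow> 'g0) \<Rightarrow> ('i \<Rightarrow> 'i \<Rightarrow> 'i \<Rightarrow> 'x \<Rightarrow> 'g1)
   \<Rightarrow> ('a \<times> ('x \<times> 'g0) \<Rightarrow> 'i \<times> ('x \<times> 'g0)) \<Rightarrow> (('a \<times> 'a) \<times> ('x \<times> 'g1) \<Rightarrow> ('i \<times> 'i) \<times> ('x \<times> 'g1))
   \<Rightarrow> bool" where
  "bundle_mor s t u V dx de U cx ce f0 f1 \<longleftrightarrow>
     continuous_map (ObjTop V) (ObjTop U) f0 \<and>
     continuous_map (MorTop V) (MorTop U) f1 \<and>
     (\<forall>m\<in>MorP V. srcP s (f1 m) = f0 (srcP s m) \<and> tgtP t cx (f1 m) = f0 (tgtP t dx m)) \<and>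
     (\<forall>m\<in>MorP V. \<forall>n\<in>MorP V. tgtP t dx m = srcP s n \<longrightarrow>
        f1 (compP t u dx de m n) = compP t u cx ce (f1 m) (f1 n)) \<and>
     (\<forall>p\<in>ObjP V. f1 (identP s t u V dx de p) = identP s t u U cx ce (f0 p)) \<and>
     (\<forall>p\<in>ObjP V. \<forall>y. f0 (actO p y) = actO (f0 p) y) \<and>
     (\<forall>m\<in>MorP V. \<forall>h. f1 (actM m h) = actM (f1 m) h) \<and>
     (\<forall>p\<in>ObjP V. projO (f0 p) = projO p) \<and>
     (\<forall>m\<in>MorP V. projM (f1 m) = projM m)"

end

theory Submission
  imports Defs
begin


declare add_uminus_conv_diff[simp del]
declare minus_add[simp]

locale tg =
  fixes s t :: "'g1::topological_group_add \<Rightarrow> 'g0::topological_group_add" and u :: "'g0 \<Rightarrow> 'g1"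
  assumes TG: "top_2group s t u"
begin

lemma s_add[simp]: "s (a + b) = s a + s b" and t_add[simp]: "t (a + b) = t a + t b"
  and u_add[simp]: "u (x + y) = u x + u y" and su[simp]: "s (u x) = x" and tu[simp]: "t (u x) = x"
  using TG unfolding top_2group_def by auto

lemma s0[simp]: "s 0 = 0"
proof -
  have "s 0 + s 0 = s 0 + 0" using s_add[of 0 0] by simp
  then show ?thesis by (rule add_left_imp_eq)
qed
lemma t0[simp]: "t 0 = 0"
proof -
  have "t 0 + t 0 = t 0 + 0" using t_add[of 0 0] by simp
  then show ?thesis by (rule add_left_imp_eq)
qed
lemma u0[simp]: "u 0 = 0"
proof -
  have "u 0 + u 0 = u 0 + 0" using u_add[of 0 0] by simp
  then show ?thesis by (rule add_left_imp_eq)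
qed
lemma s_minus[simp]: "s (- a) = - s a"
proof -
  have "s (- a) + s a = s (- a + a)" by (rule s_add[symmetric])
  then have "s (- a) + s a = 0" by simp
  then show ?thesis by (simp add: eq_neg_iff_add_eq_0)
qed
lemma t_minus[simp]: "t (- a) = - t a"
proof -
  have "t (- a) + t a = t (- a + a)" by (rule t_add[symmetric])
  then have "t (- a) + t a = 0" by simp
  then show ?thesis by (simp add: eq_neg_iff_add_eq_0)
qed
lemma u_minus[simp]: "u (- a) = - u a"
proof -
  have "u (- a) + u a = u (- a + a)" by (rule u_add[symmetric])
  then have "u (- a) + u a = 0" by simp
  then show ?thesis by (simp add: eq_neg_iff_add_eq_0)
qed

lemma cont_u: "continuous_on UNIV u" using TG unfolding top_2group_def by auto

lemma peiffer: assumes "s a = 0" "t b = 0" shows "a + b = b + a"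
proof -
  have hom: "\<And>g h g' h'. s h = t g \<Longrightarrow> s h' = t g' \<Longrightarrow>
        comp2 t u (g + g') (h + h') = comp2 t u g h + comp2 t u g' h'"
    using TG unfolding top_2group_def by blast
  have "comp2 t u (b + 0) (0 + a) = comp2 t u b 0 + comp2 t u 0 a"
    by (rule hom) (simp_all add: assms)
  then show ?thesis using assms by (simp add: comp2_def)
qed

lemma conj_peiffer: assumes "s e = 0" "s y = 0"
  shows "u (t e) + y + - u (t e) = e + y + - e"
proof -
  define k where "k = - e + u (t e)"
  have tk: "t k = 0" by (simp add: k_def)
  have ue: "u (t e) = e + k" by (simp add: k_def)
  have "k + y = y + k" using peiffer[OF assms(2) tk] by simp
  have "e + k + y + - k + - e = e + (k + y) + - k + - e" by (simp add: add.assoc)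
  also have "\<dots> = e + (y + k) + - k + - e" using \<open>k + y = y + k\<close> by simp
  also have "\<dots> = e + y + - e" by (simp add: add.assoc)
  finally have "e + k + y + - k + - e = e + y + - e" .
  then show ?thesis by (simp add: ue add.assoc)
qed

end

locale cc = tg s t u for s t :: "'g1::topological_group_add \<Rightarrow> 'g0::topological_group_add" and u :: "'g0 \<Rightarrow> 'g1" +
  fixes U :: "'i \<Rightarrow> 'x::topological_space set" and xx :: "'i \<Rightarrow> 'i \<Rightarrow> 'x \<Rightarrow> 'g0"
    and ee :: "'i \<Rightarrow> 'i \<Rightarrow> 'i \<Rightarrow> 'x \<Rightarrow> 'g1"
  assumes CC: "cech_cocycle s t u U xx ee"
begin

lemma cc_s: "v \<in> U i \<Longrightarrow> v \<in> U j \<Longrightarrow> v \<in> U k \<Longrightarrow> s (ee i j k v) = 0"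
  using CC unfolding cech_cocycle_def by blast
lemma cc3: "v \<in> U i \<Longrightarrow> v \<in> U j \<Longrightarrow> v \<in> U k \<Longrightarrow> t (ee i j k v) + xx i j v + xx j k v = xx i k v"
  using CC unfolding cech_cocycle_def by blast
lemma cc4: "v \<in> U i \<Longrightarrow> v \<in> U j \<Longrightarrow> v \<in> U k \<Longrightarrow> v \<in> U l \<Longrightarrow>
   ee i k l v + ee i j k v = ee i j l v + (u (xx i j v) + ee j k l v + - u (xx i j v))"
  using CC unfolding cech_cocycle_def conj2_def by (simp add: u_minus)

lemma x_ii: "v \<in> U i \<Longrightarrow> xx i i v = - t (ee i i i v)"
proof -
  assume v: "v \<in> U i"
  have h3: "t (ee i i i v) + xx i i v + xx i i v = xx i i v" using cc3[OF v v v] .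
  have "t (ee i i i v) + xx i i v = (t (ee i i i v) + xx i i v + xx i i v) + - xx i i v"
    by (simp add: add.assoc)
  also have "\<dots> = xx i i v + - xx i i v" by (simp only: h3)
  finally have "t (ee i i i v) + xx i i v = 0" by simp
  then show ?thesis using minus_unique by metis
qed

lemma e_jii: "v \<in> U i \<Longrightarrow> v \<in> U j \<Longrightarrow> ee j i i v = u (xx j i v) + ee i i i v + - u (xx j i v)"
proof -
  assume a: "v \<in> U i" "v \<in> U j"
  have "ee j i i v + ee j i i v = ee j i i v + (u (xx j i v) + ee i i i v + - u (xx j i v))"
    using cc4[of v j i i i] a by simp
  then show ?thesis by simp
qed

lemma e_iik: "v \<in> U i \<Longrightarrow> v \<in> U k \<Longrightarrow> ee i i k v = u (t (ee i i i v)) + ee i i i v + - u (t (ee i i i v))"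
proof -
  assume a: "v \<in> U i" "v \<in> U k"
  have "ee i i k v + ee i i i v = ee i i k v + (u (xx i i v) + ee i i k v + - u (xx i i v))"
    using cc4[of v i i i k] a by simp
  then have "ee i i i v = u (xx i i v) + ee i i k v + - u (xx i i v)" by simp
  then have "- u (xx i i v) + ee i i i v + u (xx i i v) = ee i i k v" by (simp add: add.assoc)
  then show ?thesis using x_ii[OF a(1)] by simp
qed

definition idg :: "'i \<Rightarrow> 'x \<Rightarrow> 'g0 \<Rightarrow> 'g1" where
  "idg i v x = - u (xx i i v) + - ee i i i v + u (xx i i v + x)"

lemma s_idg: "v \<in> U i \<Longrightarrow> s (idg i v x) = x" by (simp add: idg_def cc_s)
lemma t_idg: "v \<in> U i \<Longrightarrow> - xx i i v + t (idg i v x) = x" by (simp add: idg_def x_ii add.assoc)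

lemma left_id:
  assumes v: "v \<in> U i" "v \<in> U k" and sh: "s h = x"
  shows "compP t u xx ee ((i,i),(v, idg i v x)) ((i',k),(v',h)) = ((i,k),(v,h))"
proof -
  define E where "E = ee i i i v"
  define a where "a = u (t E)"
  define w where "w = h + - u x"
  define p where "p = - a + w + a"
  have sE: "s E = 0" using cc_s v by (simp add: E_def)
  have sw: "s w = 0" by (simp add: w_def sh)
  have sp: "s p = 0" by (simp add: p_def a_def sw)
  have tEa: "t (E + - a) = 0" by (simp add: a_def)
  have comm: "(E + - a) + p = p + (E + - a)" using peiffer[OF sp tEa] by simp
  have xii: "xx i i v = - t E" using x_ii[OF v(1)] by (simp add: E_def)
  have eiik: "ee i i k v = a + E + - a" using e_iik[OF v] by (simp add: E_def a_def)
  have idg: "idg i v x = a + - E + (- a + u x)" by (simp add: idg_def xii a_def E_def)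
  have tidg: "u (t (idg i v x)) = - a + u x" by (simp add: idg a_def add.assoc)
  have "ee i i k v + (u (xx i i v) + h + - u (t (idg i v x)) + idg i v x)
      = a + ((E + - a) + p) + ((a + - E) + (- a + u x))"
    by (simp add: eiik xii tidg idg a_def p_def w_def add.assoc)
  also have "\<dots> = a + (p + (E + - a)) + ((a + - E) + (- a + u x))" by (simp add: comm)
  also have "\<dots> = h" by (simp add: p_def w_def add.assoc)
  finally show ?thesis by (simp add: compP_def comp2_def)
qed

lemma right_id:
  assumes v: "v \<in> U i" "v \<in> U j" and th: "- xx j i v + t h = x"
  shows "compP t u xx ee ((j,i),(v,h)) ((i',i),(v', idg i v x)) = ((j,i),(v,h))"
proof -
  define E where "E = ee i i i v"
  define a where "a = u (t E)"
  have sE: "s E = 0" using cc_s v by (simp add: E_def)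
  have c: "a + E + - a = E" using conj_peiffer[OF sE sE] by (simp add: a_def add.assoc)
  have "a + E = (a + E + - a) + a" by (simp add: add.assoc)
  then have comm: "E + a = a + E" using c by simp
  have xii: "xx i i v = - t E" using x_ii[OF v(1)] by (simp add: E_def)
  have ejii: "ee j i i v = u (xx j i v) + E + - u (xx j i v)" using e_jii[OF v] by (simp add: E_def)
  have ux: "u x = - u (xx j i v) + u (t h)" using th by (metis u_add u_minus)
  have idg: "idg i v x = a + - E + (- a + u x)" by (simp add: idg_def xii a_def E_def)
  have "ee j i i v + (u (xx j i v) + idg i v x + - u (t h) + h)
      = u (xx j i v) + (E + a) + - E + - a + - u (xx j i v) + h"
    by (simp add: ejii idg ux add.assoc)
  also have "\<dots> = h" by (simp add: comm add.assoc)
  finally show ?thesis by (simp add: compP_def comp2_def)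
qed

end


context cc begin

lemma assoc:
  assumes v: "v \<in> U i" "v \<in> U j" "v \<in> U k" "v \<in> U l" and sw: "s w = - xx j k v + t h"
  shows "compP t u xx ee (compP t u xx ee ((i,j),(v,g)) ((j,k),(v2,h))) ((k,l),(v3,w))
       = compP t u xx ee ((i,j),(v,g)) (compP t u xx ee ((j,k),(v,h)) ((k,l),(v3,w)))"
proof -
  define E where "E = ee i j k v"
  define a where "a = u (t E)"
  define X where "X = u (xx i j v)"
  define W where "W = u (xx j k v) + w + - u (t h)"
  define Y where "Y = X + W + - X"
  have sE: "s E = 0" using cc_s v by (simp add: E_def)
  have sW: "s W = 0" by (simp add: W_def sw)
  have sY: "s Y = 0" by (simp add: Y_def X_def sW)
  have conj: "a + Y + - a = E + Y + - E" using conj_peiffer[OF sE sY] by (simp add: a_def)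
  have c3: "xx i k v = t E + xx i j v + xx j k v" using cc3[OF v(1-3)] by (simp add: E_def)
  have c4: "ee i j l v + X + ee j k l v = ee i k l v + E + X"
  proof -
    have "ee i k l v + E = ee i j l v + (X + ee j k l v + - X)" using cc4[OF v] by (simp add: E_def X_def)
    then have "ee i k l v + E + X = ee i j l v + (X + ee j k l v + - X) + X" by simp
    then show ?thesis by (simp add: add.assoc)
  qed
  define G where "G = ee i j k v + (u (xx i j v) + h + - u (t g) + g)"
  have uxik: "u (xx i k v) = a + X + u (xx j k v)" by (simp add: c3 a_def X_def)
  have utG: "u (t G) = a + X + u (t h)" by (simp add: G_def a_def X_def E_def add.assoc)
  have "ee i k l v + (u (xx i k v) + w + - u (t G) + G)
      = ee i k l v + (a + Y + - a) + (E + X + h + - u (t g) + g)"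
    by (simp add: uxik Y_def W_def G_def E_def X_def a_def add.assoc)
  also have "\<dots> = ee i k l v + (E + Y + - E) + (E + X + h + - u (t g) + g)" by (simp only: conj)
  also have "\<dots> = (ee i k l v + E + X) + (W + (h + - u (t g) + g))" by (simp add: Y_def add.assoc)
  also have "\<dots> = (ee i j l v + X + ee j k l v) + (W + (h + - u (t g) + g))" by (simp only: c4)
  also have "\<dots> = ee i j l v + (u (xx i j v) + (ee j k l v + (u (xx j k v) + w + - u (t h) + h)) + - u (t g) + g)"
    by (simp add: W_def X_def add.assoc)
  finally show ?thesis by (simp add: compP_def comp2_def G_def)
qed

lemma comp_src_tgt:
  assumes v: "v \<in> U i" "v \<in> U j" "v \<in> U k" and sh: "s h = - xx i j v + t g"
  shows "srcP s (compP t u xx ee ((i,j),(v,g)) ((j,k),(v2,h))) = srcP s ((i,j),(v,g))"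
    and "tgtP t xx (compP t u xx ee ((i,j),(v,g)) ((j,k),(v2,h))) = tgtP t xx ((j,k),(v,h))"
proof -
  show "srcP s (compP t u xx ee ((i,j),(v,g)) ((j,k),(v2,h))) = srcP s ((i,j),(v,g))"
    using cc_s[OF v] by (simp add: compP_def comp2_def srcP_def sh add.assoc)
  have c3: "xx i k v = t (ee i j k v) + xx i j v + xx j k v" using cc3[OF v] by simp
  show "tgtP t xx (compP t u xx ee ((i,j),(v,g)) ((j,k),(v2,h))) = tgtP t xx ((j,k),(v,h))"
    by (simp add: compP_def comp2_def tgtP_def c3 add.assoc)
qed

lemma te_eq:
  assumes v: "v \<in> U i" "v \<in> U j" "v \<in> U k"
  shows "t (ee i j k v) = xx i k v + - xx j k v + - xx i j v"
proof -
  have "t (ee i j k v) = (t (ee i j k v) + xx i j v + xx j k v) + - xx j k v + - xx i j v"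
    by (simp add: add.assoc)
  also have "\<dots> = xx i k v + - xx j k v + - xx i j v" by (simp only: cc3[OF v])
  finally show ?thesis .
qed

lemma L1:
  assumes "- xx i j v + t k = z"
  shows "compP t u xx ee ((i,j),(v,k)) ((j',q),(v',u z)) = ((i,q),(v, ee i j q v + k))"
proof -
  have "u z = - u (xx i j v) + u (t k)" using assms by (metis u_add u_minus)
  then show ?thesis by (simp add: compP_def comp2_def add.assoc)
qed

lemma L2: "compP t u xx ee ((a,p),(v,u z)) ((p',q),(v',g)) = ((a,q),(v, ee a p q v + (u (xx a p v) + g)))"
  by (simp add: compP_def comp2_def add.assoc)

lemma identP_eq:
  assumes v: "v \<in> U i"
  shows "identP s t u U xx ee (i,(v,x)) = ((i,i),(v, idg i v x))"
  unfolding identP_def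
proof (rule the_equality, intro conjI ballI impI)
  show "((i, i), v, idg i v x) \<in> MorP U" using v by (simp add: MorP_def)
  show "srcP s ((i, i), v, idg i v x) = (i, v, x)" using v by (simp add: srcP_def s_idg)
  show "tgtP t xx ((i, i), v, idg i v x) = (i, v, x)" using v by (simp add: tgtP_def t_idg)
  fix n :: "('i \<times> 'i) \<times> 'x \<times> 'g1" assume n: "n \<in> MorP U"
  obtain i' k v' h where ne: "n = ((i',k),(v',h))" by (metis prod.collapse)
  { assume "srcP s n = (i, v, x)"
    then have "i' = i" "v' = v" "s h = x" by (auto simp: ne srcP_def)
    then show "compP t u xx ee ((i, i), v, idg i v x) n = n" using left_id n v by (simp add: ne MorP_def) }
  { assume "tgtP t xx n = (i, v, x)"
    then have "k = i" "v' = v" "- xx i' i v + t h = x" by (auto simp: ne tgtP_def)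
    then show "compP t u xx ee n ((i, i), v, idg i v x) = n" using right_id n v by (simp add: ne MorP_def) }
next
  fix m :: "('i \<times> 'i) \<times> 'x \<times> 'g1" assume m: "m \<in> MorP U \<and> srcP s m = (i, v, x) \<and> tgtP t xx m = (i, v, x) \<and>
       (\<forall>n\<in>MorP U. srcP s n = (i, v, x) \<longrightarrow> compP t u xx ee m n = n) \<and>
       (\<forall>n\<in>MorP U. tgtP t xx n = (i, v, x) \<longrightarrow> compP t u xx ee n m = n)"
  obtain i' k v' g where me: "m = ((i',k),(v',g))" by (metis prod.collapse)
  have eqs: "i' = i" "v' = v" "s g = x" "k = i" "- xx i i v + t g = x"
    using m by (auto simp: me srcP_def tgtP_def)
  have "compP t u xx ee m m = m" using m by blast
  then have h: "ee i i i v + (u (xx i i v) + g + - u (t g) + g) = g"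
    by (simp add: me eqs compP_def comp2_def)
  have "ee i i i v + u (xx i i v) + g + - u (t g) = 0"
  proof -
    have "ee i i i v + u (xx i i v) + g + - u (t g) = (ee i i i v + (u (xx i i v) + g + - u (t g) + g)) + - g"
      by (simp add: add.assoc)
    also have "\<dots> = 0" by (simp only: h) simp
    finally show ?thesis .
  qed
  then have "g = - u (xx i i v) + - ee i i i v + u (t g)"
    by (metis add.assoc add_minus_cancel minus_add_cancel add_0_right add_right_imp_eq add.left_inverse)
  moreover have "t g = xx i i v + x" using eqs(5) by (metis add_minus_cancel)
  ultimately show "m = ((i, i), v, idg i v x)" by (simp add: me eqs idg_def)
qed

end


lemma sum_cont_into:
  fixes A :: "'a \<Rightarrow> 'w::topological_space set" and B :: "'b \<Rightarrow> 'z::topological_space set"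
    and k :: "'a \<Rightarrow> 'w \<Rightarrow> 'b" and F :: "'a \<Rightarrow> 'w \<Rightarrow> 'z"
  assumes op: "\<And>a j. open {w \<in> A a. k a w = j}"
    and ct: "\<And>a j. continuous_on {w \<in> A a. k a w = j} (F a)"
    and mp: "\<And>a w. w \<in> A a \<Longrightarrow> F a w \<in> B (k a w)"
  shows "continuous_map (sum_topology (\<lambda>a. top_of_set (A a)) UNIV)
            (sum_topology (\<lambda>b. top_of_set (B b)) UNIV) (\<lambda>(a,w). (k a w, F a w))"
  unfolding continuous_map_def
proof (intro conjI allI impI)
  show "(\<lambda>(a, w). (k a w, F a w)) \<in> topspace (sum_topology (\<lambda>a. top_of_set (A a)) UNIV)
        \<rightarrow> topspace (sum_topology (\<lambda>b. top_of_set (B b)) UNIV)"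
    using mp by auto
  fix V assume V: "openin (sum_topology (\<lambda>b. top_of_set (B b)) UNIV) V"
  then have "\<forall>j. \<exists>Op. open Op \<and> {z. (j,z) \<in> V} = B j \<inter> Op"
    by (auto simp: openin_sum_topology openin_open)
  then obtain Op where Op: "\<And>j. open (Op j)" "\<And>j. {z. (j,z) \<in> V} = B j \<inter> Op j" by metis
  show "openin (sum_topology (\<lambda>a. top_of_set (A a)) UNIV)
          {x \<in> topspace (sum_topology (\<lambda>a. top_of_set (A a)) UNIV). (case x of (a, w) \<Rightarrow> (k a w, F a w)) \<in> V}"
    unfolding openin_sum_topology
  proof (intro conjI ballI)
    show "{x \<in> topspace (sum_topology (\<lambda>a. top_of_set (A a)) UNIV). (case x of (a, w) \<Rightarrow> (k a w, F a w)) \<in> V}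
          \<subseteq> Sigma UNIV (topspace \<circ> (\<lambda>a. top_of_set (A a)))" by auto
    fix a :: 'a
    have eq: "{w. (a, w) \<in> {x \<in> topspace (sum_topology (\<lambda>a. top_of_set (A a)) UNIV). (case x of (a, w) \<Rightarrow> (k a w, F a w)) \<in> V}}
        = (\<Union>j. F a -` Op j \<inter> {w \<in> A a. k a w = j})"
    proof -
      have "(k a w, F a w) \<in> V \<longleftrightarrow> F a w \<in> Op (k a w)" if "w \<in> A a" for w
        using Op(2)[of "k a w"] mp[OF that] by blast
      then show ?thesis by auto
    qed
    have "open (\<Union>j. F a -` Op j \<inter> {w \<in> A a. k a w = j})"
      using ct op Op(1) continuous_on_open_vimage by blast
    then show "openin (top_of_set (A a)) {w. (a, w) \<in> {x \<in> topspace (sum_topology (\<lambda>a. top_of_set (A a)) UNIV). (case x of (a, w) \<Rightarrow> (k a w, F a w)) \<in> V}}"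
      unfolding eq by (intro open_subset) auto
  qed
qed

lemma sum_cont_from:
  fixes A :: "'a \<Rightarrow> 'w::topological_space set" and B :: "'b \<Rightarrow> 'z::topological_space set"
  assumes c: "continuous_map (sum_topology (\<lambda>a. top_of_set (A a)) UNIV)
            (sum_topology (\<lambda>b. top_of_set (B b)) UNIV) \<phi>"
    and oA: "open (A a)"
  shows "open {w \<in> A a. fst (\<phi> (a,w)) = j}" and "continuous_on {w \<in> A a. fst (\<phi> (a,w)) = j} (\<lambda>w. snd (\<phi> (a,w)))"
proof -
  have cp: "continuous_map (top_of_set (A a)) (sum_topology (\<lambda>b. top_of_set (B b)) UNIV) (\<lambda>w. \<phi> (a,w))"
    using continuous_map_compose[OF continuous_map_component_injection[of a UNIV "\<lambda>a. top_of_set (A a)"] c]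
    by (simp add: o_def)
  have ts: "\<phi> (a,w) \<in> Sigma UNIV B" if "w \<in> A a" for w
    using cp that unfolding continuous_map_def by (force simp: o_def Pi_def)
  have key: "open {w \<in> A a. fst (\<phi> (a,w)) = j \<and> snd (\<phi> (a,w)) \<in> Op}" if "open Op" for Op
  proof -
    define Q where "Q = {(j', z). j' = j \<and> z \<in> B j \<inter> Op}"
    have "openin (sum_topology (\<lambda>b. top_of_set (B b)) UNIV) Q"
      unfolding openin_sum_topology
    proof (intro conjI ballI)
      show "Q \<subseteq> Sigma UNIV (topspace \<circ> (\<lambda>b. top_of_set (B b)))" by (auto simp: Q_def)
      fix j' :: 'b
      show "openin (top_of_set (B j')) {x. (j', x) \<in> Q}"
      proof (cases "j' = j")
        case True
        then have "{x. (j', x) \<in> Q} = B j' \<inter> Op" by (auto simp: Q_def)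
        then show ?thesis using that by auto
      next
        case False
        then have "{x. (j', x) \<in> Q} = {}" by (auto simp: Q_def)
        then show ?thesis by simp
      qed
    qed
    then have "openin (top_of_set (A a)) {w \<in> topspace (top_of_set (A a)). \<phi> (a,w) \<in> Q}"
      using openin_continuous_map_preimage[OF cp] by blast
    moreover have "{w \<in> topspace (top_of_set (A a)). \<phi> (a,w) \<in> Q} = {w \<in> A a. fst (\<phi> (a,w)) = j \<and> snd (\<phi> (a,w)) \<in> Op}"
      using ts by (force simp: Q_def)
    ultimately show ?thesis using openin_open_trans oA by metis
  qed
  have "{w \<in> A a. fst (\<phi> (a,w)) = j} = {w \<in> A a. fst (\<phi> (a,w)) = j \<and> snd (\<phi> (a,w)) \<in> UNIV}" by simp
  then show op: "open {w \<in> A a. fst (\<phi> (a,w)) = j}" using key[of UNIV] by simp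
  show "continuous_on {w \<in> A a. fst (\<phi> (a,w)) = j} (\<lambda>w. snd (\<phi> (a,w)))"
    unfolding continuous_on_open_vimage[OF op]
  proof (intro allI impI)
    fix Op :: "'z set" assume "open Op"
    moreover have "(\<lambda>w. snd (\<phi> (a, w))) -` Op \<inter> {w \<in> A a. fst (\<phi> (a, w)) = j} = {w \<in> A a. fst (\<phi> (a,w)) = j \<and> snd (\<phi> (a,w)) \<in> Op}"
      by auto
    ultimately show "open ((\<lambda>w. snd (\<phi> (a, w))) -` Op \<inter> {w \<in> A a. fst (\<phi> (a, w)) = j})" using key by simp
  qed
qed

lemma ObjTop_alt: "ObjTop U = sum_topology (\<lambda>i. top_of_set (U i \<times> UNIV)) UNIV"
  by (simp add: ObjTop_def)

lemma MorTop_alt: "MorTop U = sum_topology (\<lambda>p. top_of_set ((U (fst p) \<inter> U (snd p)) \<times> UNIV)) UNIV"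
  unfolding MorTop_def by (simp add: case_prod_unfold)



declare add_uminus_conv_diff[simp del]
declare minus_add[simp]

lemma topspace_ObjTop: "topspace (ObjTop U) = ObjP U"
  by (auto simp: ObjTop_def ObjP_def)
lemma topspace_MorTop: "topspace (MorTop U) = MorP U"
  by (auto simp: MorTop_def MorP_def)

locale main = tg s t u for s t :: "'g1::topological_group_add \<Rightarrow> 'g0::topological_group_add" and u :: "'g0 \<Rightarrow> 'g1" +
  fixes U :: "'i \<Rightarrow> 'x::topological_space set" and V :: "'a \<Rightarrow> 'x set"
    and cx :: "'i \<Rightarrow> 'i \<Rightarrow> 'x \<Rightarrow> 'g0" and ce :: "'i \<Rightarrow> 'i \<Rightarrow> 'i \<Rightarrow> 'x \<Rightarrow> 'g1"
    and dx :: "'a \<Rightarrow> 'a \<Rightarrow> 'x \<Rightarrow> 'g0" and de :: "'a \<Rightarrow> 'a \<Rightarrow> 'a \<Rightarrow> 'x \<Rightarrow> 'g1"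
    and f0 :: "'a \<times> ('x \<times> 'g0) \<Rightarrow> 'i \<times> ('x \<times> 'g0)"
    and f1 :: "('a \<times> 'a) \<times> ('x \<times> 'g1) \<Rightarrow> ('i \<times> 'i) \<times> ('x \<times> 'g1)"
    and \<alpha> :: "'a \<Rightarrow> 'i"
  assumes oU: "open_cover U" and oV: "open_cover V" and ref: "refines V U \<alpha>"
    and cocU: "cech_cocycle s t u U cx ce" and cocV: "cech_cocycle s t u V dx de"
    and BM: "bundle_mor s t u V dx de U cx ce f0 f1"

lemma (in main) cocM: "cech_cocycle s t u V (restrX cx \<alpha>) (restrE ce \<alpha>)"
proof -
  have sub: "v \<in> V a \<Longrightarrow> v \<in> U (\<alpha> a)" for v a using ref by (auto simp: refines_def)
  show ?thesis
  unfolding cech_cocycle_def restrX_def restrE_def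
  proof (intro conjI allI impI)
    fix a b
    show "continuous_on (V a \<inter> V b) (cx (\<alpha> a) (\<alpha> b))"
      using cocU sub unfolding cech_cocycle_def by (meson IntE IntI continuous_on_subset subsetI)
  next
    fix a b c
    show "continuous_on (V a \<inter> V b \<inter> V c) (ce (\<alpha> a) (\<alpha> b) (\<alpha> c))"
      using cocU sub unfolding cech_cocycle_def by (meson IntE IntI continuous_on_subset subsetI)
  qed (use cocU sub in \<open>auto simp: cech_cocycle_def\<close>)
qed

sublocale main \<subseteq> cU: cc s t u U cx ce
  by (rule cc.intro[OF tg_axioms]) (simp add: cc_axioms_def cocU)
sublocale main \<subseteq> cV: cc s t u V dx de
  by (rule cc.intro[OF tg_axioms]) (simp add: cc_axioms_def cocV)
sublocale main \<subseteq> cM: cc s t u V "restrX cx \<alpha>" "restrE ce \<alpha>"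
  by (rule cc.intro[OF tg_axioms]) (simp add: cc_axioms_def cocM)

context main begin

lemma sub: "v \<in> V a \<Longrightarrow> v \<in> U (\<alpha> a)" using ref by (auto simp: refines_def)
lemma openU: "open (U i)" using oU by (simp add: open_cover_def)
lemma openV: "open (V a)" using oV by (simp add: open_cover_def)

lemma f0c: "continuous_map (ObjTop V) (ObjTop U) f0" using BM by (simp add: bundle_mor_def)
lemma f1c: "continuous_map (MorTop V) (MorTop U) f1" using BM by (simp add: bundle_mor_def)
lemma fst_: "m \<in> MorP V \<Longrightarrow> srcP s (f1 m) = f0 (srcP s m) \<and> tgtP t cx (f1 m) = f0 (tgtP t dx m)"
  using BM by (simp add: bundle_mor_def)
lemma fcomp: "m \<in> MorP V \<Longrightarrow> n \<in> MorP V \<Longrightarrow> tgtP t dx m = srcP s n \<Longrightarrow>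
        f1 (compP t u dx de m n) = compP t u cx ce (f1 m) (f1 n)"
  using BM by (simp add: bundle_mor_def)
lemma fid: "p \<in> ObjP V \<Longrightarrow> f1 (identP s t u V dx de p) = identP s t u U cx ce (f0 p)"
  using BM by (simp add: bundle_mor_def)
lemma fact0: "p \<in> ObjP V \<Longrightarrow> f0 (actO p y) = actO (f0 p) y"
  using BM by (simp add: bundle_mor_def)
lemma fact1: "m \<in> MorP V \<Longrightarrow> f1 (actM m h) = actM (f1 m) h"
  using BM by (simp add: bundle_mor_def)
lemma fproj0: "p \<in> ObjP V \<Longrightarrow> projO (f0 p) = projO p"
  using BM by (simp add: bundle_mor_def)
lemma fproj1: "m \<in> MorP V \<Longrightarrow> projM (f1 m) = projM m"
  using BM by (simp add: bundle_mor_def)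
lemma f0mem: "p \<in> ObjP V \<Longrightarrow> f0 p \<in> ObjP U"
  using f0c unfolding continuous_map_def topspace_ObjTop by auto
lemma f1mem: "m \<in> MorP V \<Longrightarrow> f1 m \<in> MorP U"
  using f1c unfolding continuous_map_def topspace_MorTop by auto

definition \<iota> :: "'a \<Rightarrow> 'x \<Rightarrow> 'i" where "\<iota> a v = fst (f0 (a,(v,0)))"
definition yv :: "'a \<Rightarrow> 'x \<Rightarrow> 'g0" where "yv a v = snd (snd (f0 (a,(v,0))))"

lemma F0: assumes "v \<in> V a" shows "f0 (a,(v,x)) = (\<iota> a v, (v, yv a v + x))"
proof -
  have p0: "(a,(v,0)) \<in> ObjP V" using assms by (simp add: ObjP_def)
  obtain i v' y where e: "f0 (a,(v,0)) = (i,(v',y))" by (metis prod.collapse)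
  have "v' = v" using fproj0[OF p0] by (simp add: e projO_def)
  moreover have "f0 (actO (a,(v,0)) x) = actO (f0 (a,(v,0))) x" using fact0[OF p0] .
  ultimately show ?thesis by (simp add: actO_def e \<iota>_def yv_def)
qed

lemma iU: assumes "v \<in> V a" shows "v \<in> U (\<iota> a v)"
proof -
  have "(a,(v,0)) \<in> ObjP V" using assms by (simp add: ObjP_def)
  then have "f0 (a,(v,0)) \<in> ObjP U" by (rule f0mem)
  then show ?thesis using F0[OF assms, of 0] by (simp add: ObjP_def)
qed

definition G :: "('a \<times> 'a) \<times> ('x \<times> 'g1) \<Rightarrow> 'g1" where "G m = snd (snd (f1 m))"

lemma F1: assumes m: "((a,b),(v,g)) \<in> MorP V"
  shows "f1 ((a,b),(v,g)) = ((\<iota> a v, \<iota> b v),(v, G ((a,b),(v,g))))"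
    and "s (G ((a,b),(v,g))) = yv a v + s g"
    and "- cx (\<iota> a v) (\<iota> b v) v + t (G ((a,b),(v,g))) = yv b v + (- dx a b v + t g)"
proof -
  have va: "v \<in> V a" and vb: "v \<in> V b" using m by (auto simp: MorP_def)
  obtain P Q v' k where e: "f1 ((a,b),(v,g)) = ((P,Q),(v',k))" by (metis prod.collapse)
  have "v' = v" using fproj1[OF m] by (simp add: e projM_def)
  moreover have "srcP s (f1 ((a,b),(v,g))) = f0 (srcP s ((a,b),(v,g)))"
     and "tgtP t cx (f1 ((a,b),(v,g))) = f0 (tgtP t dx ((a,b),(v,g)))" using fst_[OF m] by auto
  ultimately have 1: "P = \<iota> a v" "k = G ((a,b),(v,g))" "s k = yv a v + s g"
     and 2: "Q = \<iota> b v" "- cx P Q v + t k = yv b v + (- dx a b v + t g)"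
    by (auto simp: e srcP_def tgtP_def F0[OF va] F0[OF vb] G_def)
  show "f1 ((a,b),(v,g)) = ((\<iota> a v, \<iota> b v),(v, G ((a,b),(v,g))))" using 1 2 \<open>v' = v\<close> by (simp add: e)
  show "s (G ((a,b),(v,g))) = yv a v + s g" using 1 by simp
  show "- cx (\<iota> a v) (\<iota> b v) v + t (G ((a,b),(v,g))) = yv b v + (- dx a b v + t g)" using 1 2 by simp
qed

definition h0 :: "'a \<times> ('x \<times> 'g0) \<Rightarrow> 'a \<times> ('x \<times> 'g0)" where
  "h0 = (\<lambda>(a,w). (a, (fst w, cx (\<alpha> a) (\<iota> a (fst w)) (fst w) + snd (snd (f0 (a,w))))))"

definition h1 :: "('a \<times> 'a) \<times> ('x \<times> 'g1) \<Rightarrow> ('a \<times> 'a) \<times> ('x \<times> 'g1)" where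
  "h1 = (\<lambda>(ab,w). (ab, (fst w,
      - ce (\<alpha> (fst ab)) (\<alpha> (snd ab)) (\<iota> (snd ab) (fst w)) (fst w)
      + ce (\<alpha> (fst ab)) (\<iota> (fst ab) (fst w)) (\<iota> (snd ab) (fst w)) (fst w)
      + u (cx (\<alpha> (fst ab)) (\<iota> (fst ab) (fst w)) (fst w)) + snd (snd (f1 (ab,w))))))"

definition g0 :: "'a \<times> ('x \<times> 'g0) \<Rightarrow> 'i \<times> ('x \<times> 'g0)" where
  "g0 = (\<lambda>(a,w). (\<iota> a (fst w), (fst w, - cx (\<alpha> a) (\<iota> a (fst w)) (fst w) + snd w)))"

definition g1 :: "('a \<times> 'a) \<times> ('x \<times> 'g1) \<Rightarrow> ('i \<times> 'i) \<times> ('x \<times> 'g1)" where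
  "g1 = (\<lambda>(ab,w). ((\<iota> (fst ab) (fst w), \<iota> (snd ab) (fst w)), (fst w,
      - u (cx (\<alpha> (fst ab)) (\<iota> (fst ab) (fst w)) (fst w))
      + - ce (\<alpha> (fst ab)) (\<iota> (fst ab) (fst w)) (\<iota> (snd ab) (fst w)) (fst w)
      + ce (\<alpha> (fst ab)) (\<alpha> (snd ab)) (\<iota> (snd ab) (fst w)) (fst w) + snd w)))"

lemma h0_eq: "v \<in> V a \<Longrightarrow> h0 (a,(v,x)) = (a,(v, cx (\<alpha> a) (\<iota> a v) v + (yv a v + x)))"
  by (simp add: h0_def F0)

lemma h1_eq: "h1 ((a,b),(v,g)) = ((a,b),(v, - ce (\<alpha> a) (\<alpha> b) (\<iota> b v) v + ce (\<alpha> a) (\<iota> a v) (\<iota> b v) v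
      + u (cx (\<alpha> a) (\<iota> a v) v) + G ((a,b),(v,g))))"
  by (simp add: h1_def G_def)

lemma g0_eq: "g0 (a,(v,z)) = (\<iota> a v, (v, - cx (\<alpha> a) (\<iota> a v) v + z))"
  by (simp add: g0_def)

lemma g1_eq: "g1 ((a,b),(v,k)) = ((\<iota> a v, \<iota> b v), (v, - u (cx (\<alpha> a) (\<iota> a v) v)
      + - ce (\<alpha> a) (\<iota> a v) (\<iota> b v) v + ce (\<alpha> a) (\<alpha> b) (\<iota> b v) v + k))"
  by (simp add: g1_def)

lemma comp_ok0: "p \<in> ObjP V \<Longrightarrow> f0 p = g0 (h0 p)"
  by (auto simp: ObjP_def h0_eq g0_eq F0 add.assoc)

lemma comp_ok1: assumes "m \<in> MorP V" shows "f1 m = g1 (h1 m)"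
proof -
  obtain a b v g where e: "m = ((a,b),(v,g))" by (metis prod.collapse)
  show ?thesis using F1(1)[OF assms[unfolded e]] by (simp add: e h1_eq g1_eq add.assoc)
qed

end


declare add_uminus_conv_diff[simp del]
declare minus_add[simp]

context main begin

lemma memV: "((a,b),(v,g)) \<in> MorP V \<Longrightarrow> v \<in> V a \<and> v \<in> V b" by (simp add: MorP_def)

lemma h_src_tgt: assumes m: "((a,b),(v,g)) \<in> MorP V"
  shows "srcP s (h1 ((a,b),(v,g))) = h0 (srcP s ((a,b),(v,g)))"
    and "tgtP t (restrX cx \<alpha>) (h1 ((a,b),(v,g))) = h0 (tgtP t dx ((a,b),(v,g)))"
proof -
  have va: "v \<in> V a" and vb: "v \<in> V b" using memV[OF m] by auto
  note vs = sub[OF va] sub[OF vb] iU[OF va] iU[OF vb]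
  show "srcP s (h1 ((a,b),(v,g))) = h0 (srcP s ((a,b),(v,g)))"
    using F1(2)[OF m] by (simp add: srcP_def h1_eq h0_eq va cU.cc_s vs)
  have tG: "t (G ((a,b),(v,g))) = cx (\<iota> a v) (\<iota> b v) v + (yv b v + (- dx a b v + t g))"
    using F1(3)[OF m] by (metis add_minus_cancel)
  show "tgtP t (restrX cx \<alpha>) (h1 ((a,b),(v,g))) = h0 (tgtP t dx ((a,b),(v,g)))"
    by (simp add: tgtP_def restrX_def h1_eq h0_eq vb tG cU.te_eq vs add.assoc)
qed

lemma g_src_tgt: assumes m: "((a,b),(v,k)) \<in> MorP V"
  shows "srcP s (g1 ((a,b),(v,k))) = g0 (srcP s ((a,b),(v,k)))"
    and "tgtP t cx (g1 ((a,b),(v,k))) = g0 (tgtP t (restrX cx \<alpha>) ((a,b),(v,k)))"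
proof -
  have va: "v \<in> V a" and vb: "v \<in> V b" using memV[OF m] by auto
  note vs = sub[OF va] sub[OF vb] iU[OF va] iU[OF vb]
  show "srcP s (g1 ((a,b),(v,k))) = g0 (srcP s ((a,b),(v,k)))"
    by (simp add: srcP_def g1_eq g0_eq cU.cc_s vs)
  show "tgtP t cx (g1 ((a,b),(v,k))) = g0 (tgtP t (restrX cx \<alpha>) ((a,b),(v,k)))"
    by (simp add: tgtP_def restrX_def g1_eq g0_eq cU.te_eq vs add.assoc)
qed

lemma char_h: assumes m: "((a,b),(v,g)) \<in> MorP V" and hk: "h1 ((a,b),(v,g)) = ((a,b),(v,k))"
  shows "compP t u cx ce ((\<alpha> a, \<alpha> b),(v, k)) ((\<alpha> b, \<iota> b v),(v, u (cx (\<alpha> b) (\<iota> b v) v + (yv b v + (- dx a b v + t g)))))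
       = compP t u cx ce ((\<alpha> a, \<iota> a v),(v, u (cx (\<alpha> a) (\<iota> a v) v + (yv a v + s g)))) ((\<iota> a v, \<iota> b v),(v, G ((a,b),(v,g))))"
proof -
  have vb: "v \<in> V b" using memV[OF m] by auto
  have c: "- cx (\<alpha> a) (\<alpha> b) v + t k = cx (\<alpha> b) (\<iota> b v) v + (yv b v + (- dx a b v + t g))"
    using h_src_tgt(2)[OF m] by (simp add: hk tgtP_def restrX_def h0_eq vb)
  have kk: "k = - ce (\<alpha> a) (\<alpha> b) (\<iota> b v) v + ce (\<alpha> a) (\<iota> a v) (\<iota> b v) v
      + u (cx (\<alpha> a) (\<iota> a v) v) + G ((a,b),(v,g))" using hk by (simp add: h1_eq)
  show ?thesis
    apply (simp only: cU.L1[OF c] cU.L2)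
    by (simp add: kk add.assoc)
qed

lemma char_g: assumes m: "((a,b),(v,k)) \<in> MorP V" and gk: "g1 ((a,b),(v,k)) = ((P,Q),(v,w))"
  shows "compP t u cx ce ((\<alpha> a, \<iota> a v),(v, u (s k))) ((\<iota> a v, \<iota> b v),(v,w))
       = compP t u cx ce ((\<alpha> a, \<alpha> b),(v,k)) ((\<alpha> b, \<iota> b v),(v, u (- cx (\<alpha> a) (\<alpha> b) v + t k)))"
proof -
  have ww: "w = - u (cx (\<alpha> a) (\<iota> a v) v)
      + - ce (\<alpha> a) (\<iota> a v) (\<iota> b v) v + ce (\<alpha> a) (\<alpha> b) (\<iota> b v) v + k"
    using gk by (auto simp: g1_eq)
  show ?thesis
    apply (simp only: cU.L1[OF refl] cU.L2)
    by (simp add: ww add.assoc)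
qed

end


declare add_uminus_conv_diff[simp del]
declare minus_add[simp]

context main begin

lemma hcomp: assumes m0: "m \<in> MorP V" and n0: "n \<in> MorP V" and mn: "tgtP t dx m = srcP s n"
  shows "h1 (compP t u dx de m n) = compP t u (restrX cx \<alpha>) (restrE ce \<alpha>) (h1 m) (h1 n)"
proof -
  obtain a b v g1 where me: "m = ((a,b),(v,g1))" by (metis prod.collapse)
  obtain b' c v' g2 where ne0: "n = ((b',c),(v',g2))" by (metis prod.collapse)
  have bb: "b' = b" "v' = v" and sg2: "s g2 = - dx a b v + t g1"
    using mn by (auto simp: me ne0 tgtP_def srcP_def)
  have ne: "n = ((b,c),(v,g2))" using ne0 bb by simp
  have m: "((a,b),(v,g1)) \<in> MorP V" using m0 me by simp
  have n: "((b,c),(v,g2)) \<in> MorP V" using n0 ne by simp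
  have va: "v \<in> V a" and vb: "v \<in> V b" and vc: "v \<in> V c" using memV[OF m] memV[OF n] by auto
  note vs = sub[OF va] sub[OF vb] sub[OF vc] iU[OF va] iU[OF vb] iU[OF vc]
  define gmn where "gmn = de a b c v + (u (dx a b v) + g2 + - u (t g1) + g1)"
  have cmn: "compP t u dx de m n = ((a,c),(v,gmn))" by (simp add: me ne compP_def comp2_def gmn_def)
  have mnM: "((a,c),(v,gmn)) \<in> MorP V" by (simp add: MorP_def va vc)
  have st: "srcP s (compP t u dx de ((a,b),(v,g1)) ((b,c),(v,g2))) = srcP s ((a,b),(v,g1))"
     "tgtP t dx (compP t u dx de ((a,b),(v,g1)) ((b,c),(v,g2))) = tgtP t dx ((b,c),(v,g2))"
    using cV.comp_src_tgt[OF va vb vc sg2] by auto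
  have srcmn: "s gmn = s g1" and tgtmn: "- dx a c v + t gmn = - dx b c v + t g2"
    using st by (simp_all add: cmn[unfolded me ne] srcP_def tgtP_def)
  define k1 where "k1 = snd (snd (h1 ((a,b),(v,g1))))"
  define k2 where "k2 = snd (snd (h1 ((b,c),(v,g2))))"
  define k3 where "k3 = snd (snd (h1 ((a,c),(v,gmn))))"
  have hk1: "h1 ((a,b),(v,g1)) = ((a,b),(v,k1))" by (simp add: h1_eq k1_def)
  have hk2: "h1 ((b,c),(v,g2)) = ((b,c),(v,k2))" by (simp add: h1_eq k2_def)
  have hk3: "h1 ((a,c),(v,gmn)) = ((a,c),(v,k3))" by (simp add: h1_eq k3_def)
  define A where "A = \<alpha> a"
  define B where "B = \<alpha> b"
  define C where "C = \<alpha> c"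
  define P where "P = \<iota> a v"
  define Q where "Q = \<iota> b v"
  define R where "R = \<iota> c v"
  define G1 where "G1 = G ((a,b),(v,g1))"
  define G2 where "G2 = G ((b,c),(v,g2))"
  define G3 where "G3 = G ((a,c),(v,gmn))"
  define zp where "zp = cx A P v + (yv a v + s g1)"
  define zq where "zq = cx B Q v + (yv b v + (- dx a b v + t g1))"
  define zr where "zr = cx C R v + (yv c v + (- dx b c v + t g2))"
  have f1mn: "((P,R),(v,G3)) = compP t u cx ce ((P,Q),(v,G1)) ((Q,R),(v,G2))"
    using fcomp[OF m0 n0 mn] F1(1)[OF m] F1(1)[OF n] F1(1)[OF mnM]
    by (simp add: cmn[unfolded me ne] me ne P_def Q_def R_def G1_def G2_def G3_def)
  have ch_m: "compP t u cx ce ((A,B),(v,k1)) ((B,Q),(v,u zq)) = compP t u cx ce ((A,P),(v,u zp)) ((P,Q),(v,G1))"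
    using char_h[OF m hk1] by (simp add: A_def B_def P_def Q_def zp_def zq_def G1_def)
  have ch_n: "compP t u cx ce ((B,C),(v,k2)) ((C,R),(v,u zr)) = compP t u cx ce ((B,Q),(v,u zq)) ((Q,R),(v,G2))"
    using char_h[OF n hk2] by (simp add: B_def C_def Q_def R_def zr_def zq_def G2_def sg2)
  have ch_mn: "compP t u cx ce ((A,C),(v,k3)) ((C,R),(v,u zr)) = compP t u cx ce ((A,P),(v,u zp)) ((P,R),(v,G3))"
    using char_h[OF mnM hk3] by (simp add: A_def C_def P_def R_def zr_def zp_def G3_def srcmn tgtmn)
  have tk1: "- cx A B v + t k1 = zq"
    using h_src_tgt(2)[OF m] by (simp add: hk1 tgtP_def restrX_def h0_eq vb A_def B_def zq_def Q_def)
  have tk2: "- cx B C v + t k2 = zr"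
    using h_src_tgt(2)[OF n] by (simp add: hk2 tgtP_def restrX_def h0_eq vc B_def C_def zr_def R_def)
  have sk2: "s k2 = zq"
    using h_src_tgt(1)[OF n] by (simp add: hk2 srcP_def h0_eq vb zq_def Q_def B_def sg2)
  have tk3: "- cx A C v + t k3 = zr"
    using h_src_tgt(2)[OF mnM] by (simp add: hk3 tgtP_def restrX_def h0_eq vc A_def C_def zr_def R_def tgtmn)
  define \<kappa> where "\<kappa> = ce A B C v + (u (cx A B v) + k2 + - u (t k1) + k1)"
  have cmid: "compP t u (restrX cx \<alpha>) (restrE ce \<alpha>) ((a,b),(v,k1)) ((b,c),(v,k2)) = ((a,c),(v,\<kappa>))"
    by (simp add: compP_def comp2_def restrX_def restrE_def \<kappa>_def A_def B_def C_def)
  have cc: "compP t u cx ce ((A,B),(v,k1)) ((B,C),(v,k2)) = ((A,C),(v,\<kappa>))"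
    by (simp add: compP_def comp2_def \<kappa>_def)
  have sk2': "s k2 = - cx A B v + t k1" using sk2 tk1 by simp
  have tkap: "- cx A C v + t \<kappa> = zr"
  proof -
    have "tgtP t cx (compP t u cx ce ((A,B),(v,k1)) ((B,C),(v,k2))) = tgtP t cx ((B,C),(v,k2))"
      by (rule cU.comp_src_tgt(2)) (use vs sk2' in \<open>simp_all add: A_def B_def C_def\<close>)
    then show ?thesis using tk2 by (simp add: cc tgtP_def)
  qed
  have sG2: "s G2 = yv b v + s g2" using F1(2)[OF n] by (simp add: G2_def)
  have tG1: "- cx P Q v + t G1 = yv b v + (- dx a b v + t g1)" using F1(3)[OF m] by (simp add: G1_def P_def Q_def)
  have "((A,R),(v, ce A C R v + \<kappa>)) = compP t u cx ce ((A,C),(v,\<kappa>)) ((C,R),(v,u zr))"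
    by (simp only: cU.L1[OF tkap])
  also have "\<dots> = compP t u cx ce (compP t u cx ce ((A,B),(v,k1)) ((B,C),(v,k2))) ((C,R),(v,u zr))"
    by (simp only: cc)
  also have "\<dots> = compP t u cx ce ((A,B),(v,k1)) (compP t u cx ce ((B,C),(v,k2)) ((C,R),(v,u zr)))"
    by (rule cU.assoc) (use vs tk2 in \<open>simp_all add: A_def B_def C_def R_def\<close>)
  also have "\<dots> = compP t u cx ce ((A,B),(v,k1)) (compP t u cx ce ((B,Q),(v,u zq)) ((Q,R),(v,G2)))"
    by (simp only: ch_n)
  also have "\<dots> = compP t u cx ce (compP t u cx ce ((A,B),(v,k1)) ((B,Q),(v,u zq))) ((Q,R),(v,G2))"
    by (rule sym, rule cU.assoc) (use vs in \<open>simp_all add: A_def B_def Q_def R_def sG2 zq_def sg2 add.assoc\<close>)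
  also have "\<dots> = compP t u cx ce (compP t u cx ce ((A,P),(v,u zp)) ((P,Q),(v,G1))) ((Q,R),(v,G2))"
    by (simp only: ch_m)
  also have "\<dots> = compP t u cx ce ((A,P),(v,u zp)) (compP t u cx ce ((P,Q),(v,G1)) ((Q,R),(v,G2)))"
    by (rule cU.assoc) (use vs in \<open>simp_all add: A_def P_def Q_def R_def sG2 tG1[unfolded P_def Q_def] sg2\<close>)
  also have "\<dots> = compP t u cx ce ((A,P),(v,u zp)) ((P,R),(v,G3))"
    by (simp only: f1mn)
  also have "\<dots> = compP t u cx ce ((A,C),(v,k3)) ((C,R),(v,u zr))"
    by (simp only: ch_mn)
  also have "\<dots> = ((A,R),(v, ce A C R v + k3))"
    by (simp only: cU.L1[OF tk3])
  finally have "\<kappa> = k3" by simp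
  then show ?thesis by (simp add: cmn hk1[folded me] hk2[folded ne] hk3 cmid)
qed

end


declare add_uminus_conv_diff[simp del]
declare minus_add[simp]

context main begin

lemma gcomp: assumes m0: "m \<in> MorP V" and n0: "n \<in> MorP V" and mn: "tgtP t (restrX cx \<alpha>) m = srcP s n"
  shows "g1 (compP t u (restrX cx \<alpha>) (restrE ce \<alpha>) m n) = compP t u cx ce (g1 m) (g1 n)"
proof -
  obtain a b v k1 where me: "m = ((a,b),(v,k1))" by (metis prod.collapse)
  obtain b' c v' k2 where ne0: "n = ((b',c),(v',k2))" by (metis prod.collapse)
  have bb: "b' = b" "v' = v" and sk2: "s k2 = - cx (\<alpha> a) (\<alpha> b) v + t k1"
    using mn by (auto simp: me ne0 tgtP_def srcP_def restrX_def)
  have ne: "n = ((b,c),(v,k2))" using ne0 bb by simp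
  have m: "((a,b),(v,k1)) \<in> MorP V" using m0 me by simp
  have n: "((b,c),(v,k2)) \<in> MorP V" using n0 ne by simp
  have va: "v \<in> V a" and vb: "v \<in> V b" and vc: "v \<in> V c" using memV[OF m] memV[OF n] by auto
  note vs = sub[OF va] sub[OF vb] sub[OF vc] iU[OF va] iU[OF vb] iU[OF vc]
  define A where "A = \<alpha> a"
  define B where "B = \<alpha> b"
  define C where "C = \<alpha> c"
  define P where "P = \<iota> a v"
  define Q where "Q = \<iota> b v"
  define R where "R = \<iota> c v"
  define \<kappa> where "\<kappa> = ce A B C v + (u (cx A B v) + k2 + - u (t k1) + k1)"
  have cmid: "compP t u (restrX cx \<alpha>) (restrE ce \<alpha>) m n = ((a,c),(v,\<kappa>))"
    by (simp add: me ne compP_def comp2_def restrX_def restrE_def \<kappa>_def A_def B_def C_def)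
  have cc: "compP t u cx ce ((A,B),(v,k1)) ((B,C),(v,k2)) = ((A,C),(v,\<kappa>))"
    by (simp add: compP_def comp2_def \<kappa>_def)
  have mnM: "((a,c),(v,\<kappa>)) \<in> MorP V" by (simp add: MorP_def va vc)
  have sk2': "s k2 = - cx A B v + t k1" using sk2 by (simp add: A_def B_def)
  have stk: "srcP s (compP t u cx ce ((A,B),(v,k1)) ((B,C),(v,k2))) = srcP s ((A,B),(v,k1))"
      "tgtP t cx (compP t u cx ce ((A,B),(v,k1)) ((B,C),(v,k2))) = tgtP t cx ((B,C),(v,k2))"
    using cU.comp_src_tgt[of v A B C k2 k1] vs sk2' by (auto simp: A_def B_def C_def)
  have skap: "s \<kappa> = s k1" and tkap: "- cx A C v + t \<kappa> = - cx B C v + t k2"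
    using stk by (simp_all add: cc srcP_def tgtP_def)
  define w1 where "w1 = snd (snd (g1 ((a,b),(v,k1))))"
  define w2 where "w2 = snd (snd (g1 ((b,c),(v,k2))))"
  define w3 where "w3 = snd (snd (g1 ((a,c),(v,\<kappa>))))"
  have gw1: "g1 ((a,b),(v,k1)) = ((P,Q),(v,w1))" by (simp add: g1_eq w1_def P_def Q_def)
  have gw2: "g1 ((b,c),(v,k2)) = ((Q,R),(v,w2))" by (simp add: g1_eq w2_def Q_def R_def)
  have gw3: "g1 ((a,c),(v,\<kappa>)) = ((P,R),(v,w3))" by (simp add: g1_eq w3_def P_def R_def)
  define zp where "zp = s k1"
  define zq where "zq = - cx A B v + t k1"
  define zr where "zr = - cx B C v + t k2"
  have ch_m: "compP t u cx ce ((A,P),(v,u zp)) ((P,Q),(v,w1)) = compP t u cx ce ((A,B),(v,k1)) ((B,Q),(v,u zq))"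
    using char_g[OF m gw1] by (simp add: A_def B_def P_def Q_def zp_def zq_def)
  have ch_n: "compP t u cx ce ((B,Q),(v,u zq)) ((Q,R),(v,w2)) = compP t u cx ce ((B,C),(v,k2)) ((C,R),(v,u zr))"
    using char_g[OF n gw2] by (simp add: A_def B_def C_def Q_def R_def zr_def zq_def sk2)
  have ch_mn: "compP t u cx ce ((A,P),(v,u zp)) ((P,R),(v,w3)) = compP t u cx ce ((A,C),(v,\<kappa>)) ((C,R),(v,u zr))"
    using char_g[OF mnM gw3] by (simp add: A_def B_def C_def P_def R_def zr_def zp_def skap tkap[unfolded A_def C_def B_def])
  have sw2: "s w2 = - cx B Q v + zq"
    using g_src_tgt(1)[OF n] by (simp add: gw2 srcP_def g0_eq A_def B_def Q_def zq_def sk2)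
  have tw1: "- cx P Q v + t w1 = - cx B Q v + zq"
    using g_src_tgt(2)[OF m] by (simp add: gw1 tgtP_def g0_eq restrX_def B_def Q_def zq_def A_def)
  define \<omega> where "\<omega> = ce P Q R v + (u (cx P Q v) + w2 + - u (t w1) + w1)"
  have cg: "compP t u cx ce ((P,Q),(v,w1)) ((Q,R),(v,w2)) = ((P,R),(v,\<omega>))"
    by (simp add: compP_def comp2_def \<omega>_def)
  have "((A,R),(v, ce A P R v + (u (cx A P v) + w3))) = compP t u cx ce ((A,P),(v,u zp)) ((P,R),(v,w3))"
    by (simp only: cU.L2)
  also have "\<dots> = compP t u cx ce ((A,C),(v,\<kappa>)) ((C,R),(v,u zr))" by (rule ch_mn)
  also have "\<dots> = compP t u cx ce (compP t u cx ce ((A,B),(v,k1)) ((B,C),(v,k2))) ((C,R),(v,u zr))"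
    by (simp only: cc)
  also have "\<dots> = compP t u cx ce ((A,B),(v,k1)) (compP t u cx ce ((B,C),(v,k2)) ((C,R),(v,u zr)))"
    by (rule cU.assoc) (use vs in \<open>simp_all add: A_def B_def C_def R_def zr_def\<close>)
  also have "\<dots> = compP t u cx ce ((A,B),(v,k1)) (compP t u cx ce ((B,Q),(v,u zq)) ((Q,R),(v,w2)))"
    by (simp only: ch_n)
  also have "\<dots> = compP t u cx ce (compP t u cx ce ((A,B),(v,k1)) ((B,Q),(v,u zq))) ((Q,R),(v,w2))"
    by (rule sym, rule cU.assoc) (use vs in \<open>simp_all add: A_def B_def Q_def R_def sw2\<close>)
  also have "\<dots> = compP t u cx ce (compP t u cx ce ((A,P),(v,u zp)) ((P,Q),(v,w1))) ((Q,R),(v,w2))"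
    by (simp only: ch_m)
  also have "\<dots> = compP t u cx ce ((A,P),(v,u zp)) (compP t u cx ce ((P,Q),(v,w1)) ((Q,R),(v,w2)))"
    by (rule cU.assoc) (use vs in \<open>simp_all add: A_def P_def Q_def R_def sw2 tw1[unfolded P_def Q_def]\<close>)
  also have "\<dots> = ((A,R),(v, ce A P R v + (u (cx A P v) + \<omega>)))"
    by (simp only: cg cU.L2)
  finally have "w3 = \<omega>" by simp
  then show ?thesis by (simp add: cmid gw3 gw1[folded me] gw2[folded ne] cg)
qed

lemma idgM: "cM.idg a v z = cU.idg (\<alpha> a) v z"
  by (simp add: cM.idg_def cU.idg_def restrX_def restrE_def)

lemma hid: assumes p: "p \<in> ObjP V"
  shows "h1 (identP s t u V dx de p) = identP s t u V (restrX cx \<alpha>) (restrE ce \<alpha>) (h0 p)"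
proof -
  obtain a v x where pe: "p = (a,(v,x))" by (metis prod.collapse)
  have va: "v \<in> V a" using p pe by (simp add: ObjP_def)
  note vs = sub[OF va] iU[OF va]
  define A where "A = \<alpha> a"
  define P where "P = \<iota> a v"
  define y where "y = yv a v + x"
  define zp where "zp = cx A P v + y"
  define ig where "ig = cV.idg a v x"
  have idp: "identP s t u V dx de p = ((a,a),(v,ig))" by (simp add: pe cV.identP_eq va ig_def)
  have m: "((a,a),(v,ig)) \<in> MorP V" by (simp add: MorP_def va)
  have h0p: "h0 p = (a,(v,zp))" by (simp add: pe h0_eq va zp_def A_def P_def y_def)
  have idm: "identP s t u V (restrX cx \<alpha>) (restrE ce \<alpha>) (h0 p) = ((a,a),(v, cU.idg A v zp))"
    by (simp add: h0p cM.identP_eq va idgM A_def)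
  define k where "k = snd (snd (h1 ((a,a),(v,ig))))"
  have hk: "h1 ((a,a),(v,ig)) = ((a,a),(v,k))" by (simp add: h1_eq k_def)
  have f1m: "f1 ((a,a),(v,ig)) = ((P,P),(v, cU.idg P v y))"
    using fid[OF p] unfolding idp by (simp add: pe F0 va cU.identP_eq vs P_def y_def)
  have Gm: "G ((a,a),(v,ig)) = cU.idg P v y" using F1(1)[OF m] f1m by (simp add: P_def)
  have sig: "s ig = x" and tig: "- dx a a v + t ig = x" using cV.s_idg[OF va] cV.t_idg[OF va] by (simp_all add: ig_def)
  have ch: "compP t u cx ce ((A,A),(v,k)) ((A,P),(v,u zp)) = compP t u cx ce ((A,P),(v,u zp)) ((P,P),(v, cU.idg P v y))"
    using char_h[OF m hk] by (simp add: A_def P_def sig tig Gm zp_def y_def)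
  have tk: "- cx A A v + t k = zp"
    using h_src_tgt(2)[OF m] by (simp add: hk tgtP_def restrX_def h0_eq va tig A_def zp_def P_def y_def)
  have "((A,P),(v, ce A A P v + k)) = compP t u cx ce ((A,A),(v,k)) ((A,P),(v,u zp))"
    by (simp only: cU.L1[OF tk])
  also have "\<dots> = ((A,P),(v,u zp))" unfolding ch
    by (rule cU.right_id) (use vs in \<open>simp_all add: A_def P_def zp_def\<close>)
  also have "\<dots> = compP t u cx ce ((A,A),(v, cU.idg A v zp)) ((A,P),(v,u zp))"
    by (rule sym, rule cU.left_id) (use vs in \<open>simp_all add: A_def P_def\<close>)
  also have "\<dots> = ((A,P),(v, ce A A P v + cU.idg A v zp))"
    by (rule cU.L1) (use vs in \<open>simp add: cU.t_idg A_def\<close>)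
  finally have "k = cU.idg A v zp" by simp
  then show ?thesis by (simp add: idp idm hk)
qed

lemma gid: assumes p: "p \<in> ObjP V"
  shows "g1 (identP s t u V (restrX cx \<alpha>) (restrE ce \<alpha>) p) = identP s t u U cx ce (g0 p)"
proof -
  obtain a v z where pe: "p = (a,(v,z))" by (metis prod.collapse)
  have va: "v \<in> V a" using p pe by (simp add: ObjP_def)
  note vs = sub[OF va] iU[OF va]
  define A where "A = \<alpha> a"
  define P where "P = \<iota> a v"
  define ia where "ia = cU.idg A v z"
  have idm: "identP s t u V (restrX cx \<alpha>) (restrE ce \<alpha>) p = ((a,a),(v,ia))"
    by (simp add: pe cM.identP_eq va idgM A_def ia_def)
  have m: "((a,a),(v,ia)) \<in> MorP V" by (simp add: MorP_def va)
  define y' where "y' = - cx A P v + z"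
  have idc: "identP s t u U cx ce (g0 p) = ((P,P),(v, cU.idg P v y'))"
    by (simp add: pe g0_eq cU.identP_eq vs A_def P_def y'_def)
  define w where "w = snd (snd (g1 ((a,a),(v,ia))))"
  have gw: "g1 ((a,a),(v,ia)) = ((P,P),(v,w))" by (simp add: g1_eq w_def P_def)
  have sia: "s ia = z" and tia: "- cx A A v + t ia = z"
    using cU.s_idg[of v A z] cU.t_idg[of v A z] vs by (simp_all add: ia_def A_def)
  have ch: "compP t u cx ce ((A,P),(v,u z)) ((P,P),(v,w)) = compP t u cx ce ((A,A),(v,ia)) ((A,P),(v,u z))"
    using char_g[OF m gw] by (simp add: A_def P_def sia tia[unfolded A_def])
  have "((A,P),(v, ce A P P v + (u (cx A P v) + w))) = compP t u cx ce ((A,P),(v,u z)) ((P,P),(v,w))"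
    by (simp only: cU.L2)
  also have "\<dots> = ((A,P),(v,u z))" unfolding ch ia_def
    by (rule cU.left_id) (use vs in \<open>simp_all add: A_def P_def\<close>)
  also have "\<dots> = compP t u cx ce ((A,P),(v,u z)) ((P,P),(v, cU.idg P v y'))"
    by (rule sym, rule cU.right_id) (use vs in \<open>simp_all add: A_def P_def y'_def\<close>)
  also have "\<dots> = ((A,P),(v, ce A P P v + (u (cx A P v) + cU.idg P v y')))"
    by (simp only: cU.L2)
  finally have "w = cU.idg P v y'" by simp
  then show ?thesis by (simp add: idm idc gw)
qed

lemma hact0: "p \<in> ObjP V \<Longrightarrow> h0 (actO p y) = actO (h0 p) y"
  by (auto simp: ObjP_def actO_def h0_eq add.assoc)

lemma hact1: assumes m0: "m \<in> MorP V" shows "h1 (actM m h) = actM (h1 m) h"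
proof -
  obtain a b v g where me: "m = ((a,b),(v,g))" by (metis prod.collapse)
  have m: "((a,b),(v,g)) \<in> MorP V" using m0 me by simp
  have m2: "((a,b),(v,g + h)) \<in> MorP V" using m by (simp add: MorP_def)
  have "f1 ((a,b),(v,g + h)) = actM (f1 ((a,b),(v,g))) h" using fact1[OF m, of h] by (simp add: actM_def)
  then have "G ((a,b),(v,g + h)) = G ((a,b),(v,g)) + h"
    using F1(1)[OF m] F1(1)[OF m2] by (simp add: actM_def)
  then show ?thesis by (simp add: me actM_def h1_eq add.assoc)
qed

lemma gact0: "g0 (actO p y) = actO (g0 p) y"
  by (cases p) (auto simp: actO_def g0_eq add.assoc)

lemma gact1: "g1 (actM m h) = actM (g1 m) h"
  by (cases m) (auto simp: actM_def g1_eq add.assoc)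

lemma hproj0: "projO (h0 p) = projO p" by (cases p) (simp add: h0_def projO_def)
lemma hproj1: "projM (h1 m) = projM m" by (cases m) (simp add: h1_def projM_def)
lemma gproj0: "projO (g0 p) = projO p" by (cases p) (simp add: g0_def projO_def)
lemma gproj1: "projM (g1 m) = projM m" by (cases m) (simp add: g1_def projM_def)

end


declare add_uminus_conv_diff[simp del]
declare minus_add[simp]

lemma paste: "(\<And>i. open (P i)) \<Longrightarrow> (\<And>i. continuous_on (P i) f) \<Longrightarrow> S \<subseteq> (\<Union>i. P i) \<Longrightarrow> continuous_on S f"
  by (rule continuous_on_subset[OF continuous_on_open_Union[of "range P"]]) auto

context main begin

lemma cxc: "continuous_on (U i \<inter> U j) (cx i j)" using cocU by (simp add: cech_cocycle_def)
lemma cec: "continuous_on (U i \<inter> U j \<inter> U k) (ce i j k)" using cocU by (simp add: cech_cocycle_def)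

lemma cxf: "(\<And>w. w \<in> S \<Longrightarrow> fst w \<in> U i \<inter> U j) \<Longrightarrow> continuous_on S (\<lambda>w. cx i j (fst w))"
  by (rule continuous_on_compose2[OF cxc continuous_on_fst[OF continuous_on_id]]) auto
lemma cef: "(\<And>w. w \<in> S \<Longrightarrow> fst w \<in> U i \<inter> U j \<inter> U k) \<Longrightarrow> continuous_on S (\<lambda>w. ce i j k (fst w))"
  by (rule continuous_on_compose2[OF cec continuous_on_fst[OF continuous_on_id]]) auto
lemma uc: "continuous_on S f \<Longrightarrow> continuous_on S (\<lambda>w. u (f w))"
  by (rule continuous_on_compose2[OF cont_u]) auto

lemma f0c': "continuous_map (sum_topology (\<lambda>a. top_of_set (V a \<times> UNIV)) UNIV)
     (sum_topology (\<lambda>i. top_of_set (U i \<times> UNIV)) UNIV) f0"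
  using f0c by (simp add: ObjTop_alt)
lemma f1c': "continuous_map (sum_topology (\<lambda>p. top_of_set ((V (fst p) \<inter> V (snd p)) \<times> UNIV)) UNIV)
     (sum_topology (\<lambda>p. top_of_set ((U (fst p) \<inter> U (snd p)) \<times> UNIV)) UNIV) f1"
  using f1c by (simp add: MorTop_alt)

lemma openVx: "open (V a \<times> (UNIV :: 'g0 set))" by (simp add: openV open_Times)
lemma openVVx: "open ((V a \<inter> V b) \<times> (UNIV :: 'g1 set))" by (simp add: openV open_Times open_Int)

definition PO where "PO a i = {w \<in> V a \<times> UNIV. fst (f0 (a,w)) = i}"
definition PM where "PM ab pq = {w \<in> (V (fst ab) \<inter> V (snd ab)) \<times> UNIV. fst (f1 (ab,w)) = pq}"

lemma PO_open: "open (PO a i)" and PO_cont: "continuous_on (PO a i) (\<lambda>w. snd (f0 (a,w)))"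
  using sum_cont_from[OF f0c' openVx] by (auto simp: PO_def)

lemma PM_open: "open (PM ab pq)" and PM_cont: "continuous_on (PM ab pq) (\<lambda>w. snd (f1 (ab,w)))"
  using sum_cont_from[OF f1c', of ab pq] openVVx[of "fst ab" "snd ab"] by (auto simp: PM_def)

lemma PO_iff: "w \<in> PO a i \<longleftrightarrow> w \<in> V a \<times> UNIV \<and> \<iota> a (fst w) = i"
  by (cases w) (auto simp: PO_def F0)

lemma PM_iff: "w \<in> PM (a,b) (p,q) \<longleftrightarrow> w \<in> (V a \<inter> V b) \<times> UNIV \<and> \<iota> a (fst w) = p \<and> \<iota> b (fst w) = q"
proof (cases w)
  case (Pair v g)
  show ?thesis
  proof
    assume "w \<in> PM (a,b) (p,q)"
    then have m: "((a,b),(v,g)) \<in> MorP V" and "fst (f1 ((a,b),(v,g))) = (p,q)"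
      by (auto simp: PM_def Pair MorP_def)
    then show "w \<in> (V a \<inter> V b) \<times> UNIV \<and> \<iota> a (fst w) = p \<and> \<iota> b (fst w) = q"
      using F1(1)[OF m] by (auto simp: Pair MorP_def)
  next
    assume h: "w \<in> (V a \<inter> V b) \<times> UNIV \<and> \<iota> a (fst w) = p \<and> \<iota> b (fst w) = q"
    then have m: "((a,b),(v,g)) \<in> MorP V" by (auto simp: Pair MorP_def)
    then show "w \<in> PM (a,b) (p,q)" using F1(1)[OF m] h by (auto simp: PM_def Pair)
  qed
qed

lemma h0_cont: "continuous_map (ObjTop V) (ObjTop V) h0"
  unfolding ObjTop_alt h0_def
proof (rule sum_cont_into)
  fix a :: 'a and j :: 'a
  show "open {w \<in> V a \<times> (UNIV :: 'g0 set). a = j}" by (cases "a = j") (simp_all add: openVx)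
  have "continuous_on (V a \<times> (UNIV :: 'g0 set)) (\<lambda>w. (fst w, cx (\<alpha> a) (\<iota> a (fst w)) (fst w) + snd (snd (f0 (a, w)))))"
  proof (rule paste[OF PO_open])
    fix i
    have "continuous_on (PO a i) (\<lambda>w. (fst w, cx (\<alpha> a) i (fst w) + snd (snd (f0 (a, w)))))"
      by (intro continuous_intros cxf PO_cont) (auto simp: PO_iff intro: sub iU)
    then show "continuous_on (PO a i) (\<lambda>w. (fst w, cx (\<alpha> a) (\<iota> a (fst w)) (fst w) + snd (snd (f0 (a, w)))))"
      by (rule continuous_on_cong[THEN iffD1, rotated 2]) (auto simp: PO_iff)
  next
    show "V a \<times> (UNIV :: 'g0 set) \<subseteq> (\<Union>i. PO a i)" by (auto simp: PO_iff)
  qed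
  then show "continuous_on {w \<in> V a \<times> (UNIV :: 'g0 set). a = j} (\<lambda>w. (fst w, cx (\<alpha> a) (\<iota> a (fst w)) (fst w) + snd (snd (f0 (a, w)))))"
    by (rule continuous_on_subset) auto
next
  fix a :: 'a and w :: "'x \<times> 'g0"
  assume "w \<in> V a \<times> (UNIV :: 'g0 set)"
  then show "(fst w, cx (\<alpha> a) (\<iota> a (fst w)) (fst w) + snd (snd (f0 (a, w)))) \<in> V a \<times> (UNIV :: 'g0 set)" by auto
qed

lemma g0_cont: "continuous_map (ObjTop V) (ObjTop U) g0"
  unfolding ObjTop_alt g0_def
proof (rule sum_cont_into)
  fix a :: 'a and j :: 'i
  have "{w \<in> V a \<times> (UNIV :: 'g0 set). \<iota> a (fst w) = j} = PO a j" by (auto simp: PO_iff)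
  then show "open {w \<in> V a \<times> (UNIV :: 'g0 set). \<iota> a (fst w) = j}" using PO_open by simp
  have "continuous_on {w \<in> V a \<times> (UNIV :: 'g0 set). \<iota> a (fst w) = j} (\<lambda>w. (fst w, - cx (\<alpha> a) j (fst w) + snd w))"
    by (intro continuous_intros cxf) (auto intro: sub iU)
  then show "continuous_on {w \<in> V a \<times> (UNIV :: 'g0 set). \<iota> a (fst w) = j} (\<lambda>w. (fst w, - cx (\<alpha> a) (\<iota> a (fst w)) (fst w) + snd w))"
    by (rule continuous_on_cong[THEN iffD1, rotated 2]) auto
next
  fix a :: 'a and w :: "'x \<times> 'g0"
  assume "w \<in> V a \<times> (UNIV :: 'g0 set)"
  then show "(fst w, - cx (\<alpha> a) (\<iota> a (fst w)) (fst w) + snd w) \<in> U (\<iota> a (fst w)) \<times> UNIV" by (auto intro: iU)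
qed

lemma h1_cont: "continuous_map (MorTop V) (MorTop V) h1"
  unfolding MorTop_alt h1_def
proof (rule sum_cont_into)
  fix ab :: "'a \<times> 'a" and j :: "'a \<times> 'a"
  obtain a b where abe: "ab = (a,b)" by (metis prod.collapse)
  show "open {w \<in> (V (fst ab) \<inter> V (snd ab)) \<times> (UNIV :: 'g1 set). ab = j}" by (cases "ab = j") (simp_all add: openVVx)
  have "continuous_on ((V a \<inter> V b) \<times> (UNIV :: 'g1 set)) (\<lambda>w. (fst w,
      - ce (\<alpha> a) (\<alpha> b) (\<iota> b (fst w)) (fst w)
      + ce (\<alpha> a) (\<iota> a (fst w)) (\<iota> b (fst w)) (fst w)
      + u (cx (\<alpha> a) (\<iota> a (fst w)) (fst w)) + snd (snd (f1 ((a,b),w)))))"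
  proof (rule paste[OF PM_open])
    fix pq :: "'i \<times> 'i"
    obtain p q where pqe: "pq = (p,q)" by (metis prod.collapse)
    have "continuous_on (PM (a,b) (p,q)) (\<lambda>w. (fst w,
      - ce (\<alpha> a) (\<alpha> b) q (fst w) + ce (\<alpha> a) p q (fst w)
      + u (cx (\<alpha> a) p (fst w)) + snd (snd (f1 ((a,b),w)))))"
      by (intro continuous_intros cxf cef uc PM_cont) (auto simp: PM_iff intro: sub iU)
    then show "continuous_on (PM (a,b) pq) (\<lambda>w. (fst w,
      - ce (\<alpha> a) (\<alpha> b) (\<iota> b (fst w)) (fst w)
      + ce (\<alpha> a) (\<iota> a (fst w)) (\<iota> b (fst w)) (fst w)
      + u (cx (\<alpha> a) (\<iota> a (fst w)) (fst w)) + snd (snd (f1 ((a,b),w)))))"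
      unfolding pqe by (rule continuous_on_cong[THEN iffD1, rotated 2]) (auto simp: PM_iff)
  next
    show "(V a \<inter> V b) \<times> (UNIV :: 'g1 set) \<subseteq> (\<Union>i. PM (a,b) i)"
    proof
      fix w assume "w \<in> (V a \<inter> V b) \<times> (UNIV :: 'g1 set)"
      then have "w \<in> PM (a,b) (\<iota> a (fst w), \<iota> b (fst w))" by (simp add: PM_iff)
      then show "w \<in> (\<Union>i. PM (a,b) i)" by blast
    qed
  qed
  then show "continuous_on {w \<in> (V (fst ab) \<inter> V (snd ab)) \<times> (UNIV :: 'g1 set). ab = j} (\<lambda>w. (fst w,
      - ce (\<alpha> (fst ab)) (\<alpha> (snd ab)) (\<iota> (snd ab) (fst w)) (fst w)
      + ce (\<alpha> (fst ab)) (\<iota> (fst ab) (fst w)) (\<iota> (snd ab) (fst w)) (fst w)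
      + u (cx (\<alpha> (fst ab)) (\<iota> (fst ab) (fst w)) (fst w)) + snd (snd (f1 (ab,w)))))"
    unfolding abe fst_conv snd_conv by (rule continuous_on_subset) auto
next
  fix ab :: "'a \<times> 'a" and w :: "'x \<times> 'g1"
  assume "w \<in> (V (fst ab) \<inter> V (snd ab)) \<times> (UNIV :: 'g1 set)"
  then show "(fst w,
      - ce (\<alpha> (fst ab)) (\<alpha> (snd ab)) (\<iota> (snd ab) (fst w)) (fst w)
      + ce (\<alpha> (fst ab)) (\<iota> (fst ab) (fst w)) (\<iota> (snd ab) (fst w)) (fst w)
      + u (cx (\<alpha> (fst ab)) (\<iota> (fst ab) (fst w)) (fst w)) + snd (snd (f1 (ab,w))))
      \<in> (V (fst ab) \<inter> V (snd ab)) \<times> (UNIV :: 'g1 set)" by auto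
qed

lemma g1_cont: "continuous_map (MorTop V) (MorTop U) g1"
  unfolding MorTop_alt g1_def
proof (rule sum_cont_into)
  fix ab :: "'a \<times> 'a" and pq :: "'i \<times> 'i"
  obtain a b where abe: "ab = (a,b)" by (metis prod.collapse)
  obtain p q where pqe: "pq = (p,q)" by (metis prod.collapse)
  have e: "{w \<in> (V (fst ab) \<inter> V (snd ab)) \<times> (UNIV :: 'g1 set). (\<iota> (fst ab) (fst w), \<iota> (snd ab) (fst w)) = pq} = PM (a,b) (p,q)"
    by (auto simp: PM_iff abe pqe)
  show "open {w \<in> (V (fst ab) \<inter> V (snd ab)) \<times> (UNIV :: 'g1 set). (\<iota> (fst ab) (fst w), \<iota> (snd ab) (fst w)) = pq}"
    unfolding e by (rule PM_open)
  have "continuous_on (PM (a,b) (p,q)) (\<lambda>w. (fst w, - u (cx (\<alpha> a) p (fst w))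
      + - ce (\<alpha> a) p q (fst w) + ce (\<alpha> a) (\<alpha> b) q (fst w) + snd w))"
    by (intro continuous_intros cxf cef uc) (auto simp: PM_iff intro: sub iU)
  then show "continuous_on {w \<in> (V (fst ab) \<inter> V (snd ab)) \<times> (UNIV :: 'g1 set). (\<iota> (fst ab) (fst w), \<iota> (snd ab) (fst w)) = pq}
     (\<lambda>w. (fst w, - u (cx (\<alpha> (fst ab)) (\<iota> (fst ab) (fst w)) (fst w))
      + - ce (\<alpha> (fst ab)) (\<iota> (fst ab) (fst w)) (\<iota> (snd ab) (fst w)) (fst w)
      + ce (\<alpha> (fst ab)) (\<alpha> (snd ab)) (\<iota> (snd ab) (fst w)) (fst w) + snd w))"
    unfolding e by (rule continuous_on_cong[THEN iffD1, rotated 2]) (auto simp: PM_iff abe)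
next
  fix ab :: "'a \<times> 'a" and w :: "'x \<times> 'g1"
  assume "w \<in> (V (fst ab) \<inter> V (snd ab)) \<times> (UNIV :: 'g1 set)"
  then show "(fst w, - u (cx (\<alpha> (fst ab)) (\<iota> (fst ab) (fst w)) (fst w))
      + - ce (\<alpha> (fst ab)) (\<iota> (fst ab) (fst w)) (\<iota> (snd ab) (fst w)) (fst w)
      + ce (\<alpha> (fst ab)) (\<alpha> (snd ab)) (\<iota> (snd ab) (fst w)) (fst w) + snd w)
      \<in> (U (fst (\<iota> (fst ab) (fst w), \<iota> (snd ab) (fst w))) \<inter> U (snd (\<iota> (fst ab) (fst w), \<iota> (snd ab) (fst w)))) \<times> UNIV"
    by (auto intro: iU)
qed

end


context main begin

lemma result:
  "bundle_mor s t u V dx de V (restrX cx \<alpha>) (restrE ce \<alpha>) h0 h1 \<and>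
   bundle_mor s t u V (restrX cx \<alpha>) (restrE ce \<alpha>) U cx ce g0 g1 \<and>
   (\<forall>p\<in>ObjP V. f0 p = g0 (h0 p)) \<and> (\<forall>m\<in>MorP V. f1 m = g1 (h1 m))"
proof (intro conjI ballI)
  show "bundle_mor s t u V dx de V (restrX cx \<alpha>) (restrE ce \<alpha>) h0 h1"
    unfolding bundle_mor_def
  proof (intro conjI ballI allI impI)
    show "continuous_map (ObjTop V) (ObjTop V) h0" by (rule h0_cont)
    show "continuous_map (MorTop V) (MorTop V) h1" by (rule h1_cont)
    fix m :: "('a \<times> 'a) \<times> 'x \<times> 'g1" assume m: "m \<in> MorP V"
    obtain a b v g where me: "m = ((a,b),(v,g))" by (metis prod.collapse)
    show "srcP s (h1 m) = h0 (srcP s m)" using h_src_tgt(1) m me by simp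
    show "tgtP t (restrX cx \<alpha>) (h1 m) = h0 (tgtP t dx m)" using h_src_tgt(2) m me by simp
    show "projM (h1 m) = projM m" by (rule hproj1)
    { fix n :: "('a \<times> 'a) \<times> 'x \<times> 'g1" assume "n \<in> MorP V" "tgtP t dx m = srcP s n"
      then show "h1 (compP t u dx de m n) = compP t u (restrX cx \<alpha>) (restrE ce \<alpha>) (h1 m) (h1 n)"
        using hcomp m by blast }
    { fix h show "h1 (actM m h) = actM (h1 m) h" using hact1 m by blast }
  next
    fix p :: "'a \<times> 'x \<times> 'g0" assume p: "p \<in> ObjP V"
    show "h1 (identP s t u V dx de p) = identP s t u V (restrX cx \<alpha>) (restrE ce \<alpha>) (h0 p)" using hid p by blast
    show "projO (h0 p) = projO p" by (rule hproj0)
    fix y show "h0 (actO p y) = actO (h0 p) y" using hact0 p by blast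
  qed
  show "bundle_mor s t u V (restrX cx \<alpha>) (restrE ce \<alpha>) U cx ce g0 g1"
    unfolding bundle_mor_def
  proof (intro conjI ballI allI impI)
    show "continuous_map (ObjTop V) (ObjTop U) g0" by (rule g0_cont)
    show "continuous_map (MorTop V) (MorTop U) g1" by (rule g1_cont)
    fix m :: "('a \<times> 'a) \<times> 'x \<times> 'g1" assume m: "m \<in> MorP V"
    obtain a b v g where me: "m = ((a,b),(v,g))" by (metis prod.collapse)
    show "srcP s (g1 m) = g0 (srcP s m)" using g_src_tgt(1) m me by simp
    show "tgtP t cx (g1 m) = g0 (tgtP t (restrX cx \<alpha>) m)" using g_src_tgt(2) m me by simp
    show "projM (g1 m) = projM m" by (rule gproj1)
    { fix n :: "('a \<times> 'a) \<times> 'x \<times> 'g1" assume "n \<in> MorP V" "tgtP t (restrX cx \<alpha>) m = srcP s n"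
      then show "g1 (compP t u (restrX cx \<alpha>) (restrE ce \<alpha>) m n) = compP t u cx ce (g1 m) (g1 n)"
        using gcomp m by blast }
    { fix h show "g1 (actM m h) = actM (g1 m) h" by (rule gact1) }
  next
    fix p :: "'a \<times> 'x \<times> 'g0" assume p: "p \<in> ObjP V"
    show "g1 (identP s t u V (restrX cx \<alpha>) (restrE ce \<alpha>) p) = identP s t u U cx ce (g0 p)" using gid p by blast
    show "projO (g0 p) = projO p" by (rule gproj0)
    fix y show "g0 (actO p y) = actO (g0 p) y" by (rule gact0)
  qed
next
  fix p :: "'a \<times> 'x \<times> 'g0" assume "p \<in> ObjP V" then show "f0 p = g0 (h0 p)" by (rule comp_ok0)
next
  fix m :: "('a \<times> 'a) \<times> 'x \<times> 'g1" assume "m \<in> MorP V" then show "f1 m = g1 (h1 m)" by (rule comp_ok1)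
qed

end

theorem lemma8:
  fixes s t :: "'g1::topological_group_add \<Rightarrow> 'g0::topological_group_add"
    and u :: "'g0 \<Rightarrow> 'g1"
    and U :: "'i \<Rightarrow> 'x::topological_space set"
    and V :: "'a \<Rightarrow> 'x set"
    and cx :: "'i \<Rightarrow> 'i \<Rightarrow> 'x \<Rightarrow> 'g0" and ce :: "'i \<Rightarrow> 'i \<Rightarrow> 'i \<Rightarrow> 'x \<Rightarrow> 'g1"
    and dx :: "'a \<Rightarrow> 'a \<Rightarrow> 'x \<Rightarrow> 'g0" and de :: "'a \<Rightarrow> 'a \<Rightarrow> 'a \<Rightarrow> 'x \<Rightarrow> 'g1"
    and f0 :: "'a \<times> ('x \<times> 'g0) \<Rightarrow> 'i \<times> ('x \<times> 'g0)"
    and f1 :: "('a \<times> 'a) \<times> ('x \<times> 'g1) \<Rightarrow> ('i \<times> 'i) \<times> ('x \<times> 'g1)"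
  assumes "top_2group s t u"
    and "open_cover U" and "open_cover V"
    and "\<exists>\<beta>. refines V U \<beta>"
    and "cech_cocycle s t u U cx ce"
    and "cech_cocycle s t u V dx de"
    and "bundle_mor s t u V dx de U cx ce f0 f1"
  shows "\<exists>\<alpha> h0 h1 g0 g1. refines V U \<alpha> \<and>
           bundle_mor s t u V dx de V (restrX cx \<alpha>) (restrE ce \<alpha>) h0 h1 \<and>
           bundle_mor s t u V (restrX cx \<alpha>) (restrE ce \<alpha>) U cx ce g0 g1 \<and>
           (\<forall>p\<in>ObjP V. f0 p = g0 (h0 p)) \<and> (\<forall>m\<in>MorP V. f1 m = g1 (h1 m))"
proof -
  obtain \<beta> where b: "refines V U \<beta>" using assms(4) by blast
  interpret M: main s t u U V cx ce dx de f0 f1 \<beta>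
    by (intro main.intro tg.intro main_axioms.intro) (simp_all add: assms b)
  show ?thesis using M.result b by blast
qed


end
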